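(* Let $\mathcal{B}$ be a history-deterministic generalised coBüchi automaton recognising a language $L\subseteq\Sigma^\omega$. Let $\mathcal{A}_{\min}$ be a nice, safe minimal and safe centralised history-deterministic coBüchi automaton recognising $L$, with safe components having state sets $S_1,\dots,S_k$. Let $R_1,\dots,R_m$ be the distinct residuals of $L$, let $Q^{R_j}$ be the set of states of $\mathcal{A}_{\min}$ whose language (taken as initial state) is $R_j$, and $n_j=\max_{1\le i\le k}|S_i\cap Q^{R_j}|$. Then $\mathcal{B}$ has at least $n_1+n_2+\cdots+n_m$ states (that is, at least as many states as the automaton $\mathcal{A}_{\mathrm{gen}}$ obtained by taking $n_j$ copies of the state for each residual $R_j$).
   Context: An automaton is a tuple $(Q,\Sigma,q_{\mathrm{init}},\Delta,\Gamma,\mathrm{col},W)$ with finite state set, finite input alphabet $\Sigma$, initial state, transitions $\Delta\subseteq Q\times\Sigma\times Q$, output alphabet $\Gamma$, labelling $\mathrm{col}:\Delta\to\Gamma$, acceptance condition $W\subseteq\Gamma^\omega$. A run on $w=a_1a_2\cdots$ is a sequence $(q_0,a_1,q_1)(q_1,a_2,q_2)\cdots$ of transitions with $q_0=q_{\mathrm{init}}$, accepting if its label sequence is in $W$; $\mathcal{L}(\mathcal{A})$ is the set of words with an accepting run. With a finite colour set $C$ and $\Gamma=2^C$, generalised coBüchi means $W=\{x : \text{some } c\in C \text{ occurs in only finitely many letters of } x\}$; a coBüchi automaton is the case $C=\{1\}$, its coBüchi transitions being those labelled $\{1\}$. A resolver is a map $\sigma:\Sigma^+\to\Delta$ such that for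 every $w=a_0a_1\cdots$, $\sigma(a_0)\sigma(a_0a_1)\cdots$ is a run on $w$, accepting whenever $w\in\mathcal{L}(\mathcal{A})$; history-deterministic means a resolver exists. The residual of $L$ with respect to $u\in\Sigma^*$ is $u^{-1}L=\{w : uw\in L\}$. For a coBüchi automaton: $\mathcal{A}_{\mathrm{safe}}$ is obtained by deleting coBüchi transitions; a safe component is a strongly connected component of $\mathcal{A}_{\mathrm{safe}}$; the safe language of $q$ is the set of words with an infinite path from $q$ in $\mathcal{A}_{\mathrm{safe}}$; two states are equivalent if the automaton started from each recognises the same language. Semantically deterministic: $(q,a,p_1),(q,a,p_2)\in\Delta$ implies $p_1,p_2$ equivalent; normal form: transitions between different safe components are coBüchi transitions; safe deterministic: $\mathcal{A}_{\mathrm{safe}}$ deterministic; nice: all states reachable, semantically deterministic, normal form, safe deterministic. Safe centralised: equivalent states with inclusion-comparable safe languages lie in the same safe component; safe minimal: equivalent states with equal safe languages are equal. *)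

theory Defs
  imports Main
begin

text \<open>The output alphabet Gamma is
  the type 'g; the acceptance condition W is a set of infinite words over 'g.\<close>

record ('q, 'a, 'g) automaton =
  states :: "'q set"
  alph   :: "'a set"
  init   :: 'q
  trans  :: "('q \<times> 'a \<times> 'q) set"
  col    :: "'q \<times> 'a \<times> 'q \<Rightarrow> 'g"
  accc   :: "(nat \<Rightarrow> 'g) set"

definition well_formed :: "('q, 'a, 'g) automaton \<Rightarrow> bool" where
  "well_formed A \<longleftrightarrow> finite (states A) \<and> finite (alph A) \<and> init A \<in> states A \<and>
     trans A \<subseteq> states A \<times> alph A \<times> states A"

definition is_word :: "'a set \<Rightarrow> (nat \<Rightarrow> 'a) \<Rightarrow> bool" where
  "is_word \<Sigma> w \<longleftrightarrow> (\<forall>i. w i \<in> \<Sigma>)"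

definition run_from :: "('q, 'a, 'g) automaton \<Rightarrow> 'q \<Rightarrow> (nat \<Rightarrow> 'a) \<Rightarrow> (nat \<Rightarrow> 'q \<times> 'a \<times> 'q) \<Rightarrow> bool" where
  "run_from A q w r \<longleftrightarrow> fst (r 0) = q \<and>
     (\<forall>i. r i \<in> trans A \<and> fst (snd (r i)) = w i \<and> snd (snd (r i)) = fst (r (Suc i)))"

definition accepting :: "('q, 'a, 'g) automaton \<Rightarrow> (nat \<Rightarrow> 'q \<times> 'a \<times> 'q) \<Rightarrow> bool" where
  "accepting A r \<longleftrightarrow> (\<lambda>i. col A (r i)) \<in> accc A"

definition lang_from :: "('q, 'a, 'g) automaton \<Rightarrow> 'q \<Rightarrow> (nat \<Rightarrow> 'a) set" where
  "lang_from A q = {w. is_word (alph A) w \<and> (\<exists>r. run_from A q w r \<and> accepting A r)}"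

definition lang :: "('q, 'a, 'g) automaton \<Rightarrow> (nat \<Rightarrow> 'a) set" where
  "lang A = lang_from A (init A)"

definition prefix :: "(nat \<Rightarrow> 'a) \<Rightarrow> nat \<Rightarrow> 'a list" where
  "prefix w n = map w [0..<n]"

text \<open>A resolver sigma : Sigma^+ -> Delta (on nonempty finite words).\<close>
definition resolver :: "('q, 'a, 'g) automaton \<Rightarrow> ('a list \<Rightarrow> 'q \<times> 'a \<times> 'q) \<Rightarrow> bool" where
  "resolver A \<sigma> \<longleftrightarrow> (\<forall>w. is_word (alph A) w \<longrightarrow>
      run_from A (init A) w (\<lambda>i. \<sigma> (prefix w (Suc i))) \<and>
      (w \<in> lang A \<longrightarrow> accepting A (\<lambda>i. \<sigma> (prefix w (Suc i)))))"

definition history_deterministic :: "('q, 'a, 'g) automaton \<Rightarrow> bool" where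
  "history_deterministic A \<longleftrightarrow> (\<exists>\<sigma>. resolver A \<sigma>)"

definition gen_coBuchi :: "('q, 'a, 'c set) automaton \<Rightarrow> 'c set \<Rightarrow> bool" where
  "gen_coBuchi A C \<longleftrightarrow> well_formed A \<and> finite C \<and> (\<forall>t\<in>trans A. col A t \<subseteq> C) \<and>
     accc A = {x. \<exists>c\<in>C. finite {i. c \<in> x i}}"

definition coBuchi :: "('q, 'a, nat set) automaton \<Rightarrow> bool" where
  "coBuchi A \<longleftrightarrow> gen_coBuchi A {1}"

definition coBuchi_trans :: "('q, 'a, nat set) automaton \<Rightarrow> ('q \<times> 'a \<times> 'q) set" where
  "coBuchi_trans A = {t \<in> trans A. col A t = {1}}"

definition safe_trans :: "('q, 'a, nat set) automaton \<Rightarrow> ('q \<times> 'a \<times> 'q) set" where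
  "safe_trans A = trans A - coBuchi_trans A"

definition safe_reach :: "('q, 'a, nat set) automaton \<Rightarrow> ('q \<times> 'q) set" where
  "safe_reach A = {(p, q). \<exists>a. (p, a, q) \<in> safe_trans A}\<^sup>*"

definition safe_component_of :: "('q, 'a, nat set) automaton \<Rightarrow> 'q \<Rightarrow> 'q set" where
  "safe_component_of A q = {p \<in> states A. (q, p) \<in> safe_reach A \<and> (p, q) \<in> safe_reach A}"

definition safe_components :: "('q, 'a, nat set) automaton \<Rightarrow> 'q set set" where
  "safe_components A = safe_component_of A ` states A"

definition safe_lang :: "('q, 'a, nat set) automaton \<Rightarrow> 'q \<Rightarrow> (nat \<Rightarrow> 'a) set" where
  "safe_lang A q = {w. is_word (alph A) w \<and>
     (\<exists>r. fst (r 0) = q \<and> (\<forall>i. r i \<in> safe_trans A \<and> fst (snd (r i)) = w i \<and>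
                                  snd (snd (r i)) = fst (r (Suc i))))}"

definition equivalent_states :: "('q, 'a, 'g) automaton \<Rightarrow> 'q \<Rightarrow> 'q \<Rightarrow> bool" where
  "equivalent_states A p q \<longleftrightarrow> lang_from A p = lang_from A q"

definition all_reachable :: "('q, 'a, 'g) automaton \<Rightarrow> bool" where
  "all_reachable A \<longleftrightarrow> (\<forall>q\<in>states A. (init A, q) \<in> {(p, p'). \<exists>a. (p, a, p') \<in> trans A}\<^sup>*)"

definition semantically_deterministic :: "('q, 'a, 'g) automaton \<Rightarrow> bool" where
  "semantically_deterministic A \<longleftrightarrow>
     (\<forall>q a p1 p2. (q, a, p1) \<in> trans A \<longrightarrow> (q, a, p2) \<in> trans A \<longrightarrow> equivalent_states A p1 p2)"

definition normal_form :: "('q, 'a, nat set) automaton \<Rightarrow> bool" where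
  "normal_form A \<longleftrightarrow> (\<forall>p a q. (p, a, q) \<in> trans A \<longrightarrow>
      safe_component_of A p \<noteq> safe_component_of A q \<longrightarrow> (p, a, q) \<in> coBuchi_trans A)"

definition safe_deterministic :: "('q, 'a, nat set) automaton \<Rightarrow> bool" where
  "safe_deterministic A \<longleftrightarrow>
     (\<forall>q a p1 p2. (q, a, p1) \<in> safe_trans A \<longrightarrow> (q, a, p2) \<in> safe_trans A \<longrightarrow> p1 = p2)"

definition nice :: "('q, 'a, nat set) automaton \<Rightarrow> bool" where
  "nice A \<longleftrightarrow> all_reachable A \<and> semantically_deterministic A \<and> normal_form A \<and> safe_deterministic A"

definition safe_centralised :: "('q, 'a, nat set) automaton \<Rightarrow> bool" where
  "safe_centralised A \<longleftrightarrow> (\<forall>p\<in>states A. \<forall>q\<in>states A. equivalent_states A p q \<longrightarrow>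
      (safe_lang A p \<subseteq> safe_lang A q \<or> safe_lang A q \<subseteq> safe_lang A p) \<longrightarrow>
      safe_component_of A p = safe_component_of A q)"

definition safe_minimal :: "('q, 'a, nat set) automaton \<Rightarrow> bool" where
  "safe_minimal A \<longleftrightarrow> (\<forall>p\<in>states A. \<forall>q\<in>states A. equivalent_states A p q \<longrightarrow>
      safe_lang A p = safe_lang A q \<longrightarrow> p = q)"

definition conc :: "'a list \<Rightarrow> (nat \<Rightarrow> 'a) \<Rightarrow> (nat \<Rightarrow> 'a)" where
  "conc u w = (\<lambda>i. if i < length u then u ! i else w (i - length u))"

definition residual :: "(nat \<Rightarrow> 'a) set \<Rightarrow> 'a list \<Rightarrow> (nat \<Rightarrow> 'a) set" where
  "residual L u = {w. conc u w \<in> L}"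

definition residuals :: "'a set \<Rightarrow> (nat \<Rightarrow> 'a) set \<Rightarrow> (nat \<Rightarrow> 'a) set set" where
  "residuals \<Sigma> L = {residual L u | u. set u \<subseteq> \<Sigma>}"

definition states_of_residual :: "('q, 'a, 'g) automaton \<Rightarrow> (nat \<Rightarrow> 'a) set \<Rightarrow> 'q set" where
  "states_of_residual A R = {q \<in> states A. lang_from A q = R}"

end

theory Submission
  imports Defs
begin

fun tpath :: "('q \<times> 'a \<times> 'q) set \<Rightarrow> 'q \<Rightarrow> ('q \<times> 'a \<times> 'q) list \<Rightarrow> 'q \<Rightarrow> bool" where
  "tpath T q [] q' = (q = q')"
| "tpath T q (t # ts) q' = (t \<in> T \<and> fst t = q \<and> tpath T (snd (snd t)) ts q')"

definition lbl :: "('q \<times> 'a \<times> 'q) list \<Rightarrow> 'a list" where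
  "lbl ts = map (\<lambda>t. fst (snd t)) ts"

lemma lbl_simps[simp]: "lbl (xs @ ys) = lbl xs @ lbl ys" "lbl [] = []"
  "lbl (t # ts) = fst (snd t) # lbl ts" "length (lbl ts) = length ts"
  by (auto simp: lbl_def)

lemma tpath_append: "tpath T q (xs @ ys) q'' \<longleftrightarrow> (\<exists>q'. tpath T q xs q' \<and> tpath T q' ys q'')"
  by (induction xs arbitrary: q) auto

lemma tpath_snoc: "tpath T q (ts @ [t]) q' \<longleftrightarrow> tpath T q ts (fst t) \<and> t \<in> T \<and> q' = snd (snd t)"
  by (auto simp: tpath_append)

lemma tpath_mono: "tpath T q ts q' \<Longrightarrow> T \<subseteq> T' \<Longrightarrow> tpath T' q ts q'"
  by (induction ts arbitrary: q) auto

lemma tpath_nth: "tpath T q ts q' \<Longrightarrow> (\<forall>i<length ts. ts!i \<in> T) \<and> (ts \<noteq> [] \<longrightarrow> fst (ts!0) = q)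
   \<and> (\<forall>i. Suc i < length ts \<longrightarrow> snd (snd (ts!i)) = fst (ts ! Suc i))
   \<and> (ts \<noteq> [] \<longrightarrow> q' = snd (snd (last ts)))"
proof (induction ts arbitrary: q)
  case Nil then show ?case by simp
next
  case (Cons t ts)
  then have IH: "(\<forall>i<length ts. ts!i \<in> T) \<and> (ts \<noteq> [] \<longrightarrow> fst (ts!0) = snd (snd t))
   \<and> (\<forall>i. Suc i < length ts \<longrightarrow> snd (snd (ts!i)) = fst (ts ! Suc i))
   \<and> (ts \<noteq> [] \<longrightarrow> q' = snd (snd (last ts)))" by auto
  have A: "\<forall>i<length (t#ts). (t#ts)!i \<in> T" using IH Cons.prems by (auto simp: nth_Cons split: nat.splits)
  have Bq: "\<forall>i. Suc i < length (t#ts) \<longrightarrow> snd (snd ((t#ts)!i)) = fst ((t#ts) ! Suc i)"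
  proof (intro allI impI)
    fix i assume "Suc i < length (t#ts)"
    then show "snd (snd ((t#ts)!i)) = fst ((t#ts) ! Suc i)"
      using IH by (cases i) auto
  qed
  have "q' = snd (snd (last (t#ts)))" using IH Cons.prems by (cases ts) auto
  then show ?case using A Bq Cons.prems by auto
qed

lemma tpath_take: "tpath T q ts q' \<Longrightarrow> \<exists>q''. tpath T q (take n ts) q''"
  by (metis append_take_drop_id tpath_append)

lemma tpath_lbl_alph: "tpath (trans A) q ts q' \<Longrightarrow> well_formed A \<Longrightarrow> set (lbl ts) \<subseteq> alph A"
  by (induction ts arbitrary: q) (auto simp: well_formed_def)

lemma tpath_states: "tpath (trans A) q ts q' \<Longrightarrow> well_formed A \<Longrightarrow> q \<in> states A \<Longrightarrow> q' \<in> states A"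
  by (induction ts arbitrary: q) (auto simp: well_formed_def)

definition irun :: "('q \<times> 'a \<times> 'q) set \<Rightarrow> 'q \<Rightarrow> (nat \<Rightarrow> 'a) \<Rightarrow> (nat \<Rightarrow> 'q \<times> 'a \<times> 'q) \<Rightarrow> bool" where
  "irun T q w r \<longleftrightarrow> fst (r 0) = q \<and> (\<forall>i. r i \<in> T \<and> fst (snd (r i)) = w i \<and> snd (snd (r i)) = fst (r (Suc i)))"

lemma run_from_irun: "run_from A q w r = irun (trans A) q w r"
  by (simp add: run_from_def irun_def)

lemma safe_lang_irun: "safe_lang A q = {w. is_word (alph A) w \<and> (\<exists>r. irun (safe_trans A) q w r)}"
  by (simp add: safe_lang_def irun_def)

lemma irun_mono: "irun T q w r \<Longrightarrow> T \<subseteq> T' \<Longrightarrow> irun T' q w r"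
  by (auto simp: irun_def)

lemma prefix_Suc: "prefix w (Suc n) = prefix w n @ [w n]"
  by (simp add: prefix_def)

lemma prefix_0[simp]: "prefix w 0 = []" by (simp add: prefix_def)
lemma length_prefix[simp]: "length (prefix w n) = n" by (simp add: prefix_def)

lemma irun_prefix: "irun T q w r \<Longrightarrow> tpath T q (map r [0..<k]) (fst (r k)) \<and> lbl (map r [0..<k]) = prefix w k"
proof (induction k)
  case 0 then show ?case by (simp add: irun_def)
next
  case (Suc k)
  then show ?case by (auto simp: tpath_snoc irun_def prefix_Suc)
qed

lemma irun_shift: "irun T q w r \<Longrightarrow> irun T (fst (r k)) (\<lambda>i. w (i + k)) (\<lambda>i. r (i + k))"
  by (simp add: irun_def)

lemma conc_Nil[simp]: "conc [] w = w" by (simp add: conc_def)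
lemma conc_Cons_0[simp]: "conc (x # xs) w 0 = x" by (simp add: conc_def)
lemma conc_Cons_Suc[simp]: "conc (x # xs) w (Suc i) = conc xs w i" by (simp add: conc_def)

lemma conc_append: "conc (u @ v) w = conc u (conc v w)"
  by (auto simp: conc_def nth_append fun_eq_iff)

lemma conc_shift: "(\<lambda>i. conc u w (i + length u)) = w"
  by (simp add: conc_def)

lemma prefix_conc_le: "n \<le> length u \<Longrightarrow> prefix (conc u w) n = take n u"
  by (auto simp: prefix_def conc_def intro: nth_equalityI)

lemma prefix_conc_add: "prefix (conc u w) (length u + m) = u @ prefix w m"
  by (auto simp: prefix_def conc_def nth_append intro!: nth_equalityI)

lemma irun_conc: "tpath T q ts q' \<Longrightarrow> irun T q' w r \<Longrightarrow> irun T q (conc (lbl ts) w) (conc ts r)"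
proof (induction ts arbitrary: q)
  case Nil then show ?case by simp
next
  case (Cons t ts)
  then have IH: "irun T (snd (snd t)) (conc (lbl ts) w) (conc ts r)" by auto
  have "\<forall>i. conc (t # ts) r i \<in> T \<and> fst (snd (conc (t # ts) r i)) = conc (lbl (t # ts)) w i \<and>
          snd (snd (conc (t # ts) r i)) = fst (conc (t # ts) r (Suc i))"
  proof
    fix i
    show "conc (t # ts) r i \<in> T \<and> fst (snd (conc (t # ts) r i)) = conc (lbl (t # ts)) w i \<and>
          snd (snd (conc (t # ts) r i)) = fst (conc (t # ts) r (Suc i))"
      using IH Cons.prems by (cases i) (auto simp: irun_def)
  qed
  then show ?case using Cons.prems by (simp add: irun_def)
qed

lemma is_word_conc: "is_word S (conc u w) \<longleftrightarrow> set u \<subseteq> S \<and> is_word S w"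
proof
  assume a: "is_word S (conc u w)"
  have "set u \<subseteq> S"
  proof
    fix x assume "x \<in> set u"
    then obtain i where "i < length u" "u ! i = x" by (auto simp: in_set_conv_nth)
    then show "x \<in> S" using a by (metis conc_def is_word_def)
  qed
  moreover have "is_word S w" using a conc_shift[of u w] unfolding is_word_def by metis
  ultimately show "set u \<subseteq> S \<and> is_word S w" by simp
next
  assume "set u \<subseteq> S \<and> is_word S w"
  then show "is_word S (conc u w)" by (auto simp: is_word_def conc_def)
qed

lemma is_word_shift: "is_word S w \<Longrightarrow> is_word S (\<lambda>i. w (i + k))"
  by (simp add: is_word_def)

lemma set_prefix: "is_word S w \<Longrightarrow> set (prefix w n) \<subseteq> S"
  by (auto simp: is_word_def prefix_def)

lemma finite_shift: "finite {i. P (f (i + k))} \<longleftrightarrow> finite {i. P (f (i::nat))}"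
proof
  assume "finite {i. P (f (i + k))}"
  moreover have "{i. P (f i)} \<subseteq> {..<k} \<union> (\<lambda>i. i + k) ` {i. P (f (i + k))}"
  proof
    fix i assume "i \<in> {i. P (f i)}"
    then show "i \<in> {..<k} \<union> (\<lambda>i. i + k) ` {i. P (f (i + k))}"
      by (cases "i < k") (auto intro!: image_eqI[of _ _ "i - k"])
  qed
  ultimately show "finite {i. P (f i)}" by (meson finite_UnI finite_imageI finite_lessThan finite_subset)
next
  assume a: "finite {i. P (f i)}"
  have "{i. P (f (i + k))} = (\<lambda>i. i + k) -` {i. P (f i)}" by auto
  moreover have "finite ((\<lambda>i. i + k) -` {i. P (f i)})" using a by (rule finite_vimageI) (simp add: inj_on_def)
  ultimately show "finite {i. P (f (i + k))}" by simp
qed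

lemma acc_shift: "gen_coBuchi A C \<Longrightarrow> accepting A (\<lambda>i. r (i + k)) \<longleftrightarrow> accepting A r"
  unfolding accepting_def gen_coBuchi_def
  using finite_shift[of "\<lambda>x. _ \<in> x" "\<lambda>i. col A (r i)" k] by auto

lemma acc_conc: "gen_coBuchi A C \<Longrightarrow> accepting A (conc ts r) \<longleftrightarrow> accepting A r"
  using acc_shift[of A C "conc ts r" "length ts"] conc_shift[of ts r] by simp



lemma residual_Nil[simp]: "residual L [] = L" by (simp add: residual_def)
lemma residual_append: "residual (residual L u) v = residual L (u @ v)"
  by (simp add: residual_def conc_append)

lemma L1:
  assumes g: "gen_coBuchi A C" and p: "tpath (trans A) q ts q'" and w: "w \<in> lang_from A q'"
  shows "conc (lbl ts) w \<in> lang_from A q"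
proof -
  from w obtain r where r: "irun (trans A) q' w r" "accepting A r" and ww: "is_word (alph A) w"
    by (auto simp: lang_from_def run_from_irun)
  have wf: "well_formed A" using g by (simp add: gen_coBuchi_def)
  have "irun (trans A) q (conc (lbl ts) w) (conc ts r)" using irun_conc[OF p r(1)] .
  moreover have "accepting A (conc ts r)" using acc_conc[OF g] r(2) by simp
  moreover have "is_word (alph A) (conc (lbl ts) w)"
    using is_word_conc tpath_lbl_alph[OF p wf] ww by blast
  ultimately show ?thesis by (auto simp: lang_from_def run_from_irun)
qed

lemma L2:
  assumes g: "gen_coBuchi A C" and w: "conc u w \<in> lang_from A q"
  shows "\<exists>ts q'. tpath (trans A) q ts q' \<and> lbl ts = u \<and> w \<in> lang_from A q'"
proof -
  from w obtain r where r: "irun (trans A) q (conc u w) r" "accepting A r" and ww: "is_word (alph A) (conc u w)"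
    by (auto simp: lang_from_def run_from_irun)
  define k where "k = length u"
  have "tpath (trans A) q (map r [0..<k]) (fst (r k))" "lbl (map r [0..<k]) = prefix (conc u w) k"
    using irun_prefix[OF r(1)] by auto
  moreover have "prefix (conc u w) k = u" using prefix_conc_le[of k u w] k_def by simp
  moreover have "irun (trans A) (fst (r k)) w (\<lambda>i. r (i + k))"
    using irun_shift[OF r(1), of k] conc_shift[of u w] k_def by simp
  moreover have "accepting A (\<lambda>i. r (i + k))" using acc_shift[OF g] r(2) by simp
  moreover have "is_word (alph A) w" using ww is_word_conc by blast
  ultimately show ?thesis by (auto simp: lang_from_def run_from_irun)
qed

lemma L3:
  assumes g: "gen_coBuchi A C" and sd: "semantically_deterministic A"
    and p: "tpath (trans A) q ts q'"
  shows "lang_from A q' = residual (lang_from A q) (lbl ts)"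
  using p
proof (induction ts arbitrary: q)
  case Nil then show ?case by simp
next
  case (Cons t ts)
  obtain a r where t: "t = (q, a, r)" using Cons.prems by (cases t) auto
  have tr: "(q, a, r) \<in> trans A" and pr: "tpath (trans A) r ts q'" using Cons.prems t by auto
  have step: "lang_from A r = residual (lang_from A q) [a]"
  proof
    show "lang_from A r \<subseteq> residual (lang_from A q) [a]"
    proof
      fix w assume "w \<in> lang_from A r"
      then have "conc (lbl [(q,a,r)]) w \<in> lang_from A q" using L1[OF g, of q "[(q,a,r)]" r] tr by auto
      then show "w \<in> residual (lang_from A q) [a]" by (simp add: residual_def)
    qed
  next
    show "residual (lang_from A q) [a] \<subseteq> lang_from A r"
    proof
      fix w assume "w \<in> residual (lang_from A q) [a]"
      then have "conc [a] w \<in> lang_from A q" by (simp add: residual_def)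
      from L2[OF g this] obtain ts' q'' where "tpath (trans A) q ts' q''" "lbl ts' = [a]" "w \<in> lang_from A q''"
        by blast
      have "length (lbl ts') = 1" using \<open>lbl ts' = [a]\<close> by simp
      then have "length ts' = 1" by simp
      then obtain t' where t': "ts' = [t']" by (cases ts') auto
      then have "t' \<in> trans A" "fst t' = q" "snd (snd t') = q''" "fst (snd t') = a"
        using \<open>tpath (trans A) q ts' q''\<close> \<open>lbl ts' = [a]\<close> by auto
      then have "(q, a, q'') \<in> trans A" by (cases t') auto
      then have "equivalent_states A r q''" using sd tr by (auto simp: semantically_deterministic_def)
      then show "w \<in> lang_from A r" using \<open>w \<in> lang_from A q''\<close> by (simp add: equivalent_states_def)
    qed
  qed
  have "lang_from A q' = residual (lang_from A r) (lbl ts)" using Cons.IH pr by simp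
  then show ?case using step t by (simp add: residual_append)
qed

definition rstate :: "('q, 'a, 'g) automaton \<Rightarrow> ('a list \<Rightarrow> 'q \<times> 'a \<times> 'q) \<Rightarrow> 'a list \<Rightarrow> 'q" where
  "rstate A \<sigma> u = (if u = [] then init A else snd (snd (\<sigma> u)))"

lemma R0: "resolver A \<sigma> \<Longrightarrow> is_word (alph A) W \<Longrightarrow> irun (trans A) (init A) W (\<lambda>i. \<sigma> (prefix W (Suc i)))"
  by (simp add: resolver_def run_from_irun)

lemma R1:
  assumes "resolver A \<sigma>" "is_word (alph A) W"
  shows "fst (\<sigma> (prefix W (Suc n))) = rstate A \<sigma> (prefix W n)"
proof (cases n)
  case 0 then show ?thesis using R0[OF assms] by (simp add: irun_def rstate_def)
next
  case (Suc m)
  have "snd (snd (\<sigma> (prefix W (Suc m)))) = fst (\<sigma> (prefix W (Suc (Suc m))))"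
    using R0[OF assms] by (simp add: irun_def)
  moreover have "prefix W (Suc m) \<noteq> []" by (simp add: prefix_Suc)
  ultimately show ?thesis using Suc by (simp add: rstate_def)
qed

lemma R2:
  assumes r: "resolver A \<sigma>" and u: "set u \<subseteq> alph A" and a: "a \<in> alph A"
  shows "\<sigma> (u @ [a]) \<in> trans A \<and> \<sigma> (u @ [a]) = (rstate A \<sigma> u, a, rstate A \<sigma> (u @ [a]))"
proof -
  define W where "W = conc (u @ [a]) (\<lambda>_. a)"
  have W: "is_word (alph A) W" unfolding W_def is_word_conc using u a by (auto simp: is_word_def)
  have p1: "prefix W (Suc (length u)) = u @ [a]" using prefix_conc_le[of "Suc (length u)" "u@[a]" "\<lambda>_. a"]
    by (simp add: W_def)
  have p0: "prefix W (length u) = u" using prefix_conc_le[of "length u" "u@[a]" "\<lambda>_. a"]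
    by (simp add: W_def)
  have ir: "irun (trans A) (init A) W (\<lambda>i. \<sigma> (prefix W (Suc i)))" using R0[OF r W] .
  have "W (length u) = a" by (simp add: W_def conc_def)
  then have 1: "\<sigma> (u @ [a]) \<in> trans A" "fst (snd (\<sigma> (u @ [a]))) = a"
    using ir p1 by (auto simp: irun_def dest: spec[of _ "length u"])
  have 2: "fst (\<sigma> (u @ [a])) = rstate A \<sigma> u" using R1[OF r W, of "length u"] p1 p0 by simp
  have 3: "snd (snd (\<sigma> (u @ [a]))) = rstate A \<sigma> (u @ [a])" by (simp add: rstate_def)
  show ?thesis using 1 2 3 by (cases "\<sigma> (u @ [a])") auto
qed

lemma R3:
  assumes r: "resolver A \<sigma>" and u: "set u \<subseteq> alph A"
  shows "\<exists>ts. tpath (trans A) (init A) ts (rstate A \<sigma> u) \<and> lbl ts = u"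
  using u
proof (induction u rule: rev_induct)
  case Nil then show ?case by (auto simp: rstate_def intro!: exI[of _ "[]"])
next
  case (snoc a u)
  then obtain ts where ts: "tpath (trans A) (init A) ts (rstate A \<sigma> u)" "lbl ts = u" by auto
  have s1: "\<sigma> (u @ [a]) \<in> trans A" and s2: "\<sigma> (u @ [a]) = (rstate A \<sigma> u, a, rstate A \<sigma> (u @ [a]))"
    using R2[OF r, of u a] snoc.prems by auto
  have "tpath (trans A) (init A) (ts @ [\<sigma> (u @ [a])]) (rstate A \<sigma> (u @ [a]))"
    unfolding tpath_snoc using ts s1 s2 by simp
  moreover have "lbl (ts @ [\<sigma> (u @ [a])]) = u @ [a]" using ts s2 by simp
  ultimately show ?case by blast
qed

lemma R_states:
  assumes "resolver A \<sigma>" "set u \<subseteq> alph A" "well_formed A"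
  shows "rstate A \<sigma> u \<in> states A"
proof -
  obtain ts where "tpath (trans A) (init A) ts (rstate A \<sigma> u)" using R3[OF assms(1,2)] by blast
  then show ?thesis using tpath_states[of A] assms(3) by (auto simp: well_formed_def)
qed

lemma L4:
  assumes g: "gen_coBuchi A C" and r: "resolver A \<sigma>" and u: "set u \<subseteq> alph A"
  shows "lang_from A (rstate A \<sigma> u) = residual (lang A) u"
proof
  show "lang_from A (rstate A \<sigma> u) \<subseteq> residual (lang A) u"
  proof
    fix w assume "w \<in> lang_from A (rstate A \<sigma> u)"
    moreover obtain ts where "tpath (trans A) (init A) ts (rstate A \<sigma> u)" "lbl ts = u"
      using R3[OF r u] by blast
    ultimately show "w \<in> residual (lang A) u" using L1[OF g] by (fastforce simp: residual_def lang_def)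
  qed
next
  show "residual (lang A) u \<subseteq> lang_from A (rstate A \<sigma> u)"
  proof
    fix w assume "w \<in> residual (lang A) u"
    then have wl: "conc u w \<in> lang A" by (simp add: residual_def)
    then have W: "is_word (alph A) (conc u w)" by (simp add: lang_def lang_from_def)
    define rr where "rr = (\<lambda>i. \<sigma> (prefix (conc u w) (Suc i)))"
    have ir: "irun (trans A) (init A) (conc u w) rr" using R0[OF r W] by (simp add: rr_def)
    have acc: "accepting A rr" using r wl W by (simp add: resolver_def rr_def)
    define k where "k = length u"
    have "fst (rr k) = rstate A \<sigma> u" using R1[OF r W, of k] prefix_conc_le[of k u w]
      by (simp add: rr_def k_def)
    moreover have "irun (trans A) (fst (rr k)) w (\<lambda>i. rr (i + k))"
      using irun_shift[OF ir, of k] conc_shift[of u w] k_def by simp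
    moreover have "accepting A (\<lambda>i. rr (i + k))" using acc_shift[OF g] acc by simp
    moreover have "is_word (alph A) w" using W is_word_conc by blast
    ultimately show "w \<in> lang_from A (rstate A \<sigma> u)" by (auto simp: lang_from_def run_from_irun)
  qed
qed

lemma iterate:
  assumes i0: "Inv []" and st: "\<And>k xs. Inv xs \<Longrightarrow> \<exists>ys. ys \<noteq> [] \<and> Mv k xs ys \<and> Inv (xs @ ys)"
  shows "\<exists>(r :: nat \<Rightarrow> 'x) n. n 0 = 0 \<and> strict_mono n \<and> (\<forall>k. Inv (map r [0..<n k]))
     \<and> (\<forall>k. Mv k (map r [0..<n k]) (map r [n k..<n (Suc k)]))"
proof -
  define nxt where "nxt k xs = (SOME ys. ys \<noteq> [] \<and> Mv k xs ys \<and> Inv (xs @ ys))" for k and xs :: "'x list"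
  define seq where "seq = rec_nat [] (\<lambda>k xs. xs @ nxt k xs)"
  have seq0: "seq 0 = []" and seqS: "\<And>k. seq (Suc k) = seq k @ nxt k (seq k)" by (simp_all add: seq_def)
  have nx: "Inv xs \<Longrightarrow> nxt j xs \<noteq> [] \<and> Mv j xs (nxt j xs) \<and> Inv (xs @ nxt j xs)" for j xs
    unfolding nxt_def by (rule someI_ex[OF st])
  have inv0: "Inv (seq k)" for k
    by (induction k) (auto simp: seq0 seqS i0 nx)
  have inv: "Inv (seq k) \<and> (\<forall>j. nxt j (seq k) \<noteq> [] \<and> Mv j (seq k) (nxt j (seq k)))" for k
    using inv0 nx by blast
  have len: "length (seq (Suc k)) > length (seq k)" for k using inv[of k] by (simp add: seqS)
  then have sm: "strict_mono (\<lambda>k. length (seq k))" by (simp add: strict_mono_Suc_iff)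
  have lk: "k \<le> length (seq k)" for k using strict_mono_imp_increasing[OF sm] by simp
  have pre: "k \<le> m \<Longrightarrow> take (length (seq k)) (seq m) = seq k" for k m
  proof (induction m)
    case 0 then show ?case by simp
  next
    case (Suc m)
    show ?case
    proof (cases "k \<le> m")
      case True then show ?thesis using Suc len[of m] strict_mono_less_eq[OF sm, of k m] by (simp add: seqS)
    next
      case False then have "k = Suc m" using Suc by simp
      then show ?thesis by simp
    qed
  qed
  define r where "r i = seq (Suc i) ! i" for i
  have nth_eq: "i < length (seq k) \<Longrightarrow> seq k ! i = r i" for i k
  proof -
    assume i: "i < length (seq k)"
    define m where "m = max k (Suc i)"
    have "seq k ! i = take (length (seq k)) (seq m) ! i" using pre[of k m] m_def by simp
    also have "\<dots> = seq m ! i" using i by simp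
    also have "\<dots> = take (length (seq (Suc i))) (seq m) ! i" using lk[of "Suc i"] by simp
    also have "\<dots> = seq (Suc i) ! i" using pre[of "Suc i" m] m_def by simp
    finally show ?thesis by (simp add: r_def)
  qed
  have seqr: "seq k = map r [0..<length (seq k)]" for k
    by (rule nth_equalityI) (auto simp: nth_eq)
  define n where "n k = length (seq k)" for k
  have "map r [n k..<n (Suc k)] = nxt k (seq k)" for k
  proof -
    have "n k \<le> n (Suc k)" using len[of k] by (simp add: n_def)
    then have "map r [0..<n (Suc k)] = map r [0..<n k] @ map r [n k..<n (Suc k)]"
      by (metis le_Suc_ex map_append upt_add_eq_append zero_le)
    moreover have "map r [0..<n (Suc k)] = seq k @ nxt k (seq k)" using seqr[of "Suc k"] by (simp add: seqS n_def)
    moreover have "map r [0..<n k] = seq k" using seqr[of k] by (simp add: n_def)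
    ultimately show ?thesis by simp
  qed
  moreover have "n = (\<lambda>k. length (seq k))" by (simp add: n_def fun_eq_iff)
  ultimately show ?thesis using inv seqr sm seq0
    by (intro exI[of _ r] exI[of _ n]) auto
qed

lemma tpath_all_irun:
  assumes "\<forall>k. \<exists>q'. tpath T q (map r [0..<n k]) q'" and "strict_mono (n :: nat \<Rightarrow> nat)"
  shows "irun T q (\<lambda>i. fst (snd (r i))) r"
proof -
  have tp: "\<exists>q'. tpath T q (map r [0..<m]) q'" for m
  proof -
    obtain q' where "tpath T q (map r [0..<n m]) q'" using assms(1) by blast
    from tpath_take[OF this, of m] obtain q'' where q'': "tpath T q (take m (map r [0..<n m])) q''" by blast
    have "m \<le> n m" using strict_mono_imp_increasing[OF assms(2)] by simp
    then have "take m (map r [0..<n m]) = map r [0..<m]" by (simp add: take_map)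
    then show ?thesis using q'' by auto
  qed
  have "fst (r 0) = q \<and> (\<forall>i. r i \<in> T \<and> snd (snd (r i)) = fst (r (Suc i)))"
  proof (intro conjI allI)
    obtain q' where "tpath T q (map r [0..<2]) q'" using tp by blast
    from tpath_nth[OF this] show "fst (r 0) = q" by simp
  next
    fix i
    obtain q' where "tpath T q (map r [0..<Suc (Suc i)]) q'" using tp by blast
    note N = tpath_nth[OF this]
    from N have "map r [0..<Suc (Suc i)] ! i \<in> T" by simp
    then show "r i \<in> T" by (simp del: upt_Suc)
    from N have "snd (snd (map r [0..<Suc (Suc i)] ! i)) = fst (map r [0..<Suc (Suc i)] ! Suc i)" by simp
    then show "snd (snd (r i)) = fst (r (Suc i))" by (simp del: upt_Suc)
  qed
  then show ?thesis by (simp add: irun_def)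
qed



lemma lbl_Nil_iff[simp]: "lbl ts = [] \<longleftrightarrow> ts = []" by (simp add: lbl_def)

lemma safe_det_path:
  assumes sd: "safe_deterministic A"
  shows "tpath (safe_trans A) q ts1 q1 \<Longrightarrow> tpath (safe_trans A) q ts2 q2 \<Longrightarrow> lbl ts1 = lbl ts2 \<Longrightarrow> ts1 = ts2 \<and> q1 = q2"
proof (induction ts1 arbitrary: q ts2)
  case Nil then show ?case by (cases ts2) auto
next
  case (Cons t ts1)
  then obtain t2 ts2' where ts2: "ts2 = t2 # ts2'" by (cases ts2) auto
  obtain a b where t: "t = (q, a, b)" using Cons.prems by (cases t) auto
  obtain a2 b2 where t2: "t2 = (q, a2, b2)" using Cons.prems ts2 by (cases t2) auto
  have "a = a2" using Cons.prems t t2 ts2 by simp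
  then have "b = b2" using Cons.prems t t2 ts2 sd by (auto simp: safe_deterministic_def)
  moreover have "tpath (safe_trans A) b ts1 q1" "tpath (safe_trans A) b ts2' q2" "lbl ts1 = lbl ts2'"
    using Cons.prems t t2 ts2 \<open>a = a2\<close> \<open>b = b2\<close> by auto
  ultimately have "ts1 = ts2' \<and> q1 = q2" using Cons.IH by simp
  then show ?case using t t2 ts2 \<open>a = a2\<close> \<open>b = b2\<close> by simp
qed

lemma SL_conc:
  assumes wf: "well_formed A" and p: "tpath (safe_trans A) q ts q'" and w: "w \<in> safe_lang A q'"
  shows "conc (lbl ts) w \<in> safe_lang A q"
proof -
  from w obtain r where r: "irun (safe_trans A) q' w r" and ww: "is_word (alph A) w"
    by (auto simp: safe_lang_irun)
  have "tpath (trans A) q ts q'" using p by (rule tpath_mono) (auto simp: safe_trans_def)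
  then have "set (lbl ts) \<subseteq> alph A" using tpath_lbl_alph[OF _ wf] by blast
  then show ?thesis using irun_conc[OF p r] ww by (auto simp: safe_lang_irun is_word_conc)
qed

lemma SL_split:
  assumes w: "conc u w \<in> safe_lang A q"
  shows "\<exists>ts q'. tpath (safe_trans A) q ts q' \<and> lbl ts = u \<and> w \<in> safe_lang A q'"
proof -
  from w obtain r where r: "irun (safe_trans A) q (conc u w) r" and ww: "is_word (alph A) (conc u w)"
    by (auto simp: safe_lang_irun)
  define k where "k = length u"
  have "tpath (safe_trans A) q (map r [0..<k]) (fst (r k))" "lbl (map r [0..<k]) = prefix (conc u w) k"
    using irun_prefix[OF r] by auto
  moreover have "prefix (conc u w) k = u" using prefix_conc_le[of k u w] k_def by simp
  moreover have "irun (safe_trans A) (fst (r k)) w (\<lambda>i. r (i + k))"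
    using irun_shift[OF r, of k] conc_shift[of u w] k_def by simp
  moreover have "is_word (alph A) w" using ww is_word_conc by blast
  ultimately show ?thesis by (auto simp: safe_lang_irun)
qed

lemma SL_resid:
  assumes wf: "well_formed A" and sd: "safe_deterministic A" and p: "tpath (safe_trans A) q ts q'"
  shows "safe_lang A q' = residual (safe_lang A q) (lbl ts)"
proof
  show "safe_lang A q' \<subseteq> residual (safe_lang A q) (lbl ts)"
    using SL_conc[OF wf p] by (auto simp: residual_def)
next
  show "residual (safe_lang A q) (lbl ts) \<subseteq> safe_lang A q'"
  proof
    fix w assume "w \<in> residual (safe_lang A q) (lbl ts)"
    then have "conc (lbl ts) w \<in> safe_lang A q" by (simp add: residual_def)
    from SL_split[OF this] obtain ts' q'' where "tpath (safe_trans A) q ts' q''" "lbl ts' = lbl ts" "w \<in> safe_lang A q''"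
      by blast
    moreover have "ts' = ts \<and> q'' = q'" using safe_det_path[OF sd \<open>tpath (safe_trans A) q ts' q''\<close> p] \<open>lbl ts' = lbl ts\<close> by blast
    ultimately show "w \<in> safe_lang A q'" by simp
  qed
qed

lemma rtrancl_tpath:
  assumes "(p, q) \<in> {(p, p'). \<exists>a. (p, a, p') \<in> T}\<^sup>*"
  shows "\<exists>ts. tpath T p ts q"
  using assms
proof (induction rule: rtrancl_induct)
  case base then show ?case by (auto intro: exI[of _ "[]"])
next
  case (step y z)
  then obtain ts a where "tpath T p ts y" "(y, a, z) \<in> T" by auto
  then have "tpath T p (ts @ [(y, a, z)]) z" by (simp add: tpath_snoc)
  then show ?case by blast
qed

locale setting =
  fixes B :: "('p, 'a, 'c set) automaton" and C :: "'c set"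
    and A :: "('q, 'a, nat set) automaton"
    and L :: "(nat \<Rightarrow> 'a) set" and \<Sigma> :: "'a set"
    and \<sigma>B :: "'a list \<Rightarrow> 'p \<times> 'a \<times> 'p" and \<sigma>A :: "'a list \<Rightarrow> 'q \<times> 'a \<times> 'q"
  assumes gB: "gen_coBuchi B C" and rB: "resolver B \<sigma>B"
    and aB: "alph B = \<Sigma>" and lB: "lang B = L"
    and cA: "coBuchi A" and rA: "resolver A \<sigma>A"
    and aA: "alph A = \<Sigma>" and lA: "lang A = L"
    and niceA: "nice A" and sminA: "safe_minimal A" and scA: "safe_centralised A"
begin

lemma gA: "gen_coBuchi A {1}" using cA by (simp add: coBuchi_def)
lemma wfA: "well_formed A" using gA by (simp add: gen_coBuchi_def)
lemma wfB: "well_formed B" using gB by (simp add: gen_coBuchi_def)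
lemma sdA: "semantically_deterministic A" using niceA by (simp add: nice_def)
lemma sdetA: "safe_deterministic A" using niceA by (simp add: nice_def)
lemma nfA: "normal_form A" using niceA by (simp add: nice_def)
lemma reachA: "all_reachable A" using niceA by (simp add: nice_def)

lemma safe_sub: "safe_trans A \<subseteq> trans A" by (auto simp: safe_trans_def)

lemma safe_col: "t \<in> safe_trans A \<Longrightarrow> 1 \<notin> col A t"
proof -
  assume t: "t \<in> safe_trans A"
  then have "t \<in> trans A" "col A t \<noteq> {1}" by (auto simp: safe_trans_def coBuchi_trans_def)
  moreover have "col A t \<subseteq> {1}" using gA \<open>t \<in> trans A\<close> by (auto simp: gen_coBuchi_def)
  ultimately show ?thesis by auto
qed

lemma coB_col: "t \<in> coBuchi_trans A \<Longrightarrow> 1 \<in> col A t"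
  by (auto simp: coBuchi_trans_def)

lemma not_coB_safe: "t \<in> trans A \<Longrightarrow> t \<notin> coBuchi_trans A \<Longrightarrow> t \<in> safe_trans A"
  by (auto simp: safe_trans_def)

lemma Apath_lang: "tpath (trans A) (init A) ts p \<Longrightarrow> lang_from A p = residual L (lbl ts)"
  using L3[OF gA sdA] lA by (simp add: lang_def)

lemma Bres_lang: "set u \<subseteq> \<Sigma> \<Longrightarrow> lang_from B (rstate B \<sigma>B u) = residual L u"
  using L4[OF gB rB] aB lB by simp

lemma Ares_lang: "set u \<subseteq> \<Sigma> \<Longrightarrow> lang_from A (rstate A \<sigma>A u) = residual L u"
  using L4[OF gA rA] aA lA by simp

lemma Bres_states: "set u \<subseteq> \<Sigma> \<Longrightarrow> rstate B \<sigma>B u \<in> states B"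
  using R_states[OF rB _ wfB] aB by simp

lemma Ares_states: "set u \<subseteq> \<Sigma> \<Longrightarrow> rstate A \<sigma>A u \<in> states A"
  using R_states[OF rA _ wfA] aA by simp

lemma Apath_lbl: "tpath (trans A) q ts q' \<Longrightarrow> set (lbl ts) \<subseteq> \<Sigma>"
  using tpath_lbl_alph[OF _ wfA] aA by simp

lemma Spath_lbl: "tpath (safe_trans A) q ts q' \<Longrightarrow> set (lbl ts) \<subseteq> \<Sigma>"
  using Apath_lbl tpath_mono[OF _ safe_sub] by blast

lemma reach_path: "q \<in> states A \<Longrightarrow> \<exists>ts. tpath (trans A) (init A) ts q"
  using reachA rtrancl_tpath by (fastforce simp: all_reachable_def)

lemma comp_self: "p \<in> states A \<Longrightarrow> p \<in> safe_component_of A p"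
  by (simp add: safe_component_of_def safe_reach_def)

lemma safe_step_comp:
  assumes "(p, a, p') \<in> safe_trans A"
  shows "safe_component_of A p = safe_component_of A p'"
  using nfA assms by (auto simp: normal_form_def safe_trans_def)

end

locale comp = setting +
  fixes S
  assumes S: "S \<in> safe_components A"
begin

lemma S_states: "S \<subseteq> states A"
  using S by (auto simp: safe_components_def safe_component_of_def)

lemma S_comp: "p \<in> S \<Longrightarrow> safe_component_of A p = S"
proof -
  assume p: "p \<in> S"
  obtain s where s: "S = safe_component_of A s" "s \<in> states A" using S by (auto simp: safe_components_def)
  then have ps: "(s, p) \<in> safe_reach A" "(p, s) \<in> safe_reach A" using p by (auto simp: safe_component_of_def)
  have tr: "(x, y) \<in> safe_reach A \<Longrightarrow> (y, z) \<in> safe_reach A \<Longrightarrow> (x, z) \<in> safe_reach A" for x y z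
    unfolding safe_reach_def by (rule rtrancl_trans)
  have "((p,x) \<in> safe_reach A \<and> (x,p) \<in> safe_reach A) \<longleftrightarrow> ((s,x) \<in> safe_reach A \<and> (x,s) \<in> safe_reach A)" for x
  proof
    assume "(p,x) \<in> safe_reach A \<and> (x,p) \<in> safe_reach A"
    then show "(s,x) \<in> safe_reach A \<and> (x,s) \<in> safe_reach A" using tr[OF ps(1)] tr[OF _ ps(2)] by simp
  next
    assume "(s,x) \<in> safe_reach A \<and> (x,s) \<in> safe_reach A"
    then show "(p,x) \<in> safe_reach A \<and> (x,p) \<in> safe_reach A" using tr[OF ps(2)] tr[OF _ ps(1)] by simp
  qed
  then show ?thesis unfolding s(1) safe_component_of_def by auto
qed

lemma S_step: "p \<in> S \<Longrightarrow> (p, a, p') \<in> safe_trans A \<Longrightarrow> p' \<in> S"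
proof -
  assume p: "p \<in> S" and t: "(p, a, p') \<in> safe_trans A"
  have "p' \<in> states A" using t wfA by (auto simp: safe_trans_def well_formed_def)
  then have "p' \<in> safe_component_of A p'" by (rule comp_self)
  then show ?thesis using safe_step_comp[OF t] S_comp[OF p] by simp
qed

lemma S_path: "tpath (safe_trans A) p ts p' \<Longrightarrow> p \<in> S \<Longrightarrow> p' \<in> S"
proof (induction ts arbitrary: p)
  case Nil then show ?case by simp
next
  case (Cons t ts)
  then show ?case using S_step[of p "fst (snd t)" "snd (snd t)"] by (cases t) auto
qed

lemma S_conn: "p \<in> S \<Longrightarrow> p' \<in> S \<Longrightarrow> \<exists>ts. tpath (safe_trans A) p ts p'"
proof -
  assume "p \<in> S" "p' \<in> S"
  then have "p' \<in> safe_component_of A p" using S_comp by simp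
  then have "(p, p') \<in> safe_reach A" by (simp add: safe_component_of_def)
  then show ?thesis using rtrancl_tpath by (simp add: safe_reach_def)
qed

lemma S_trivial:
  assumes p: "p \<in> S" and no: "\<not> (\<exists>a p'. (p, a, p') \<in> safe_trans A \<and> p' \<in> S)"
  shows "S = {p}"
proof -
  have "p' = p" if p': "p' \<in> S" for p'
  proof (rule ccontr)
    assume ne: "p' \<noteq> p"
    have "p' \<in> safe_component_of A p" using S_comp[OF p] p' by simp
    then have "(p, p') \<in> safe_reach A" by (simp add: safe_component_of_def)
    then have "(p, p') \<in> {(p, q). \<exists>a. (p, a, q) \<in> safe_trans A}\<^sup>*" by (simp add: safe_reach_def)
    then have "p = p' \<or> p \<noteq> p' \<and> (p, p') \<in> {(p, q). \<exists>a. (p, a, q) \<in> safe_trans A}\<^sup>+" by (rule rtranclD)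
    then have "(p, p') \<in> {(p, q). \<exists>a. (p, a, q) \<in> safe_trans A}\<^sup>+" using ne by simp
    then have "\<exists>z. (p, z) \<in> {(p, q). \<exists>a. (p, a, q) \<in> safe_trans A} \<and> (z, p') \<in> {(p, q). \<exists>a. (p, a, q) \<in> safe_trans A}\<^sup>*" by (rule tranclD)
    then obtain r where "(p, r) \<in> {(p, q). \<exists>a. (p, a, q) \<in> safe_trans A}" by (elim exE conjE)
    then have "\<exists>a. (p, a, r) \<in> safe_trans A" by simp
    then obtain a where ra: "(p, a, r) \<in> safe_trans A" by (elim exE)
    have "r \<in> S" using S_step[OF p ra] .
    then show False using no ra by blast
  qed
  then show ?thesis using p by blast
qed

end



lemma inf_hits:
  assumes "finite {i. P i}" "inj (f :: nat \<Rightarrow> nat)" "infinite K" "\<forall>k\<in>K. P (f k)"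
  shows False
proof -
  have "f ` K \<subseteq> {i. P i}" using assms(4) by auto
  then have "finite (f ` K)" using assms(1) finite_subset by blast
  then have "finite K" using assms(2) by (meson finite_imageD inj_on_subset subset_UNIV)
  then show False using assms(3) by simp
qed

lemma map_upt_split: "a \<le> b \<Longrightarrow> map r [0..<a] @ map r [a..<b] = map r [0..<(b::nat)]"
  by (metis le_Suc_ex map_append upt_add_eq_append zero_le)

lemma mod_infinite:
  assumes "j < (m::nat)"
  shows "infinite {k. k mod m = j}"
proof -
  have "inj (\<lambda>x. j + x * m)" using assms by (auto simp: inj_on_def)
  moreover have "range (\<lambda>x. j + x * m) \<subseteq> {k. k mod m = j}" using assms by auto
  ultimately show ?thesis by (meson finite_imageD finite_subset infinite_UNIV_nat inj_on_subset subset_UNIV)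
qed

context comp
begin

lemma Y:
  assumes nontriv: "\<forall>p\<in>S. \<exists>a p'. (p, a, p') \<in> safe_trans A \<and> p' \<in> S" and ne: "S \<noteq> {}"
  shows "\<exists>h p0 c. p0 \<in> S \<and> (\<exists>ts. tpath (trans A) (init A) ts p0 \<and> lbl ts = h) \<and> c \<in> C \<and>
     (\<forall>ts p. tpath (safe_trans A) p0 ts p \<longrightarrow> ts \<noteq> [] \<longrightarrow> c \<notin> col B (\<sigma>B (h @ lbl ts)))"
proof (rule ccontr)
  assume neg: "\<not> ?thesis"
  have neg': "\<exists>ts p. tpath (safe_trans A) p0 ts p \<and> ts \<noteq> [] \<and> c \<in> col B (\<sigma>B (h @ lbl ts))"
    if "p0 \<in> S" "\<exists>ts. tpath (trans A) (init A) ts p0 \<and> lbl ts = h" "c \<in> C" for h p0 c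
  proof (rule ccontr)
    assume "\<not> (\<exists>ts p. tpath (safe_trans A) p0 ts p \<and> ts \<noteq> [] \<and> c \<in> col B (\<sigma>B (h @ lbl ts)))"
    then have H: "\<forall>ts p. tpath (safe_trans A) p0 ts p \<longrightarrow> ts \<noteq> [] \<longrightarrow> c \<notin> col B (\<sigma>B (h @ lbl ts))" by auto
    have "\<exists>h p0 c. p0 \<in> S \<and> (\<exists>ts. tpath (trans A) (init A) ts p0 \<and> lbl ts = h) \<and> c \<in> C \<and>
     (\<forall>ts p. tpath (safe_trans A) p0 ts p \<longrightarrow> ts \<noteq> [] \<longrightarrow> c \<notin> col B (\<sigma>B (h @ lbl ts)))"
      apply (rule exI[of _ h], rule exI[of _ p0], rule exI[of _ c])
      using that H by (intro conjI)
    then show False using neg by (rule notE[rotated])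
  qed
  obtain s0 where s0: "s0 \<in> S" using ne by blast
  obtain ts0 where ts0: "tpath (trans A) (init A) ts0 s0" using reach_path S_states s0 by blast
  define h0 where "h0 = lbl ts0"
  have finC: "finite C" using gB by (simp add: gen_coBuchi_def)
  obtain l where l: "set l = C" using finite_list[OF finC] by blast
  define cs where "cs k = l ! (k mod length l)" for k
  define Inv where "Inv (xs :: ('d \<times> 'b \<times> 'd) list) = (\<exists>p. tpath (safe_trans A) s0 xs p)" for xs
  define Mv where "Mv k (xs :: ('d \<times> 'b \<times> 'd) list) (ys :: ('d \<times> 'b \<times> 'd) list) = (C \<noteq> {} \<longrightarrow> cs k \<in> col B (\<sigma>B (h0 @ lbl (xs @ ys))))" for k xs ys
  have st: "\<exists>ys. ys \<noteq> [] \<and> Mv k xs ys \<and> Inv (xs @ ys)" if inv: "Inv xs" for k xs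
  proof -
    obtain p where p: "tpath (safe_trans A) s0 xs p" using inv unfolding Inv_def by blast
    have pS: "p \<in> S" using S_path[OF p s0] .
    show ?thesis
    proof (cases "C = {}")
      case True
      obtain a p' where "(p, a, p') \<in> safe_trans A" using nontriv pS by blast
      then have "tpath (safe_trans A) s0 (xs @ [(p, a, p')]) p'" using p by (simp add: tpath_snoc)
      then show ?thesis using True by (auto simp: Mv_def Inv_def)
    next
      case False
      then have "l \<noteq> []" using l by auto
      then have ck: "cs k \<in> C" using l nth_mem[of "k mod length l" l] by (simp add: cs_def)
      have "tpath (trans A) (init A) (ts0 @ xs) p"
        using ts0 tpath_mono[OF p safe_sub] by (auto simp: tpath_append)
      then have "\<exists>ts. tpath (trans A) (init A) ts p \<and> lbl ts = h0 @ lbl xs" by (auto simp: h0_def)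
      then obtain ys p' where ys: "tpath (safe_trans A) p ys p'" "ys \<noteq> []" "cs k \<in> col B (\<sigma>B ((h0 @ lbl xs) @ lbl ys))"
        using neg'[OF pS _ ck] by blast
      have "tpath (safe_trans A) s0 (xs @ ys) p'" using p ys(1) by (auto simp: tpath_append)
      then show ?thesis using ys by (auto simp: Mv_def Inv_def)
    qed
  qed
  have i0: "Inv []" by (simp add: Inv_def)
  obtain r n where rn: "n 0 = 0" "strict_mono (n :: nat \<Rightarrow> nat)" "\<forall>k. Inv (map r [0..<n k])"
      "\<forall>k. Mv k (map r [0..<n k]) (map r [n k..<n (Suc k)])"
    using iterate[of Inv Mv, OF i0 st] by blast
  define W' where "W' i = fst (snd (r i))" for i
  have ir: "irun (safe_trans A) s0 W' r" using tpath_all_irun[of "safe_trans A" s0 r n] rn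
    unfolding Inv_def W'_def by blast
  define W where "W = conc h0 W'"
  have irA: "irun (trans A) (init A) W (conc ts0 r)"
    unfolding W_def h0_def by (rule irun_conc[OF ts0 irun_mono[OF ir safe_sub]])
  have "{i. 1 \<in> col A (r i)} = {}" using ir safe_col by (auto simp: irun_def)
  then have "accepting A r" using gA by (auto simp: accepting_def gen_coBuchi_def)
  then have accA: "accepting A (conc ts0 r)" using acc_conc[OF gA] by simp
  have "set h0 \<subseteq> \<Sigma>" using Apath_lbl[OF ts0] h0_def by simp
  moreover have "is_word \<Sigma> W'"
  proof -
    have "W' i \<in> \<Sigma>" for i
    proof -
      have "r i \<in> trans A" using ir safe_sub by (auto simp: irun_def)
      then show ?thesis using wfA aA by (auto simp: W'_def well_formed_def)
    qed
    then show ?thesis by (simp add: is_word_def)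
  qed
  ultimately have Ww: "is_word \<Sigma> W" by (simp add: W_def is_word_conc)
  have "W \<in> lang A" using irA accA Ww aA by (auto simp: lang_def lang_from_def run_from_irun)
  then have "W \<in> lang B" using lA lB by simp
  then have "accepting B (\<lambda>i. \<sigma>B (prefix W (Suc i)))" using rB Ww aB by (simp add: resolver_def)
  then obtain c where c: "c \<in> C" "finite {i. c \<in> col B (\<sigma>B (prefix W (Suc i)))}"
    using gB by (auto simp: accepting_def gen_coBuchi_def)
  then have CnE: "C \<noteq> {}" by auto
  obtain j where j: "j < length l" "l ! j = c" using c(1) l by (auto simp: in_set_conv_nth)
  define pos where "pos k = length h0 + n (Suc k) - 1" for k
  have "inj pos"
  proof (rule injI)
    fix x y assume "pos x = pos y"
    moreover have "n (Suc x) > 0" "n (Suc y) > 0" using rn(1,2) by (metis strict_mono_less zero_less_Suc)+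
    ultimately have "n (Suc x) = n (Suc y)" by (simp add: pos_def)
    then show "x = y" using strict_mono_eq[OF rn(2)] by simp
  qed
  moreover have "\<forall>k\<in>{k. k mod length l = j}. c \<in> col B (\<sigma>B (prefix W (Suc (pos k))))"
  proof
    fix k assume "k \<in> {k. k mod length l = j}"
    then have ck: "cs k = c" using j by (simp add: cs_def)
    have le: "n k \<le> n (Suc k)" using rn(2) by (simp add: strict_mono_less_eq)
    have pos1: "n (Suc k) > 0" using rn(1,2) by (metis strict_mono_less zero_less_Suc)
    have "c \<in> col B (\<sigma>B (h0 @ lbl (map r [0..<n (Suc k)])))"
    proof -
      have "lbl (map r [0..<n k]) @ lbl (map r [n k..<n (Suc k)]) = lbl (map r [0..<n (Suc k)])"
        using map_upt_split[OF le, of r] by (metis lbl_simps(1))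
      have X: "cs k \<in> col B (\<sigma>B (h0 @ lbl (map r [0..<n k] @ map r [n k..<n (Suc k)])))"
        using rn(4) CnE unfolding Mv_def by blast
      then show ?thesis unfolding map_upt_split[OF le, of r] ck .
    qed
    moreover have "lbl (map r [0..<n (Suc k)]) = prefix W' (n (Suc k))"
      using irun_prefix[OF ir] W'_def by blast
    moreover have "h0 @ prefix W' (n (Suc k)) = prefix W (Suc (pos k))"
      using prefix_conc_add[of h0 W' "n (Suc k)"] pos1 by (simp add: W_def pos_def)
    ultimately show "c \<in> col B (\<sigma>B (prefix W (Suc (pos k))))" by simp
  qed
  ultimately show False using inf_hits[OF c(2) _ mod_infinite[OF j(1)]] by blast
qed

end



context setting
begin
lemma transA_lbl: "t \<in> trans A \<Longrightarrow> fst (snd t) \<in> \<Sigma>"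
  using wfA aA by (cases t) (auto simp: well_formed_def)
lemma transB_lbl: "t \<in> trans B \<Longrightarrow> fst (snd t) \<in> \<Sigma>"
  using wfB aB by (cases t) (auto simp: well_formed_def)
end

context comp
begin

lemma SL_nonempty:
  assumes nontriv: "\<forall>p\<in>S. \<exists>a p'. (p, a, p') \<in> safe_trans A \<and> p' \<in> S" and p: "p \<in> S"
  shows "\<exists>w. w \<in> safe_lang A p"
proof -
  define Inv where "Inv (xs :: ('d \<times> 'b \<times> 'd) list) = (\<exists>p'. tpath (safe_trans A) p xs p')" for xs
  define Mv where "Mv (k::nat) (xs :: ('d \<times> 'b \<times> 'd) list) (ys :: ('d \<times> 'b \<times> 'd) list) = True" for k xs ys
  have st: "\<exists>ys. ys \<noteq> [] \<and> Mv k xs ys \<and> Inv (xs @ ys)" if inv: "Inv xs" for k xs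
  proof -
    obtain p' where p': "tpath (safe_trans A) p xs p'" using inv unfolding Inv_def by blast
    have "p' \<in> S" using S_path[OF p' p] .
    then obtain a p'' where "(p', a, p'') \<in> safe_trans A" using nontriv by blast
    then have "tpath (safe_trans A) p (xs @ [(p', a, p'')]) p''" using p' by (simp add: tpath_snoc)
    then show ?thesis unfolding Mv_def Inv_def by blast
  qed
  have i0: "Inv []" by (simp add: Inv_def)
  obtain r n where rn: "strict_mono (n :: nat \<Rightarrow> nat)" "\<forall>k. Inv (map r [0..<n k])"
    using iterate[of Inv Mv, OF i0 st] by blast
  have ir: "irun (safe_trans A) p (\<lambda>i. fst (snd (r i))) r" using tpath_all_irun[of "safe_trans A" p r n] rn
    unfolding Inv_def by blast
  have "is_word (alph A) (\<lambda>i. fst (snd (r i)))"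
  proof -
    have "r i \<in> trans A" for i using ir safe_sub by (auto simp: irun_def)
    then show ?thesis using transA_lbl aA by (auto simp: is_word_def)
  qed
  then show ?thesis using ir by (auto simp: safe_lang_irun)
qed

end

locale region = comp +
  fixes h p0 c
  assumes nontriv: "\<forall>p\<in>S. \<exists>a p'. (p, a, p') \<in> safe_trans A \<and> p' \<in> S"
    and p0S: "p0 \<in> S" and hp: "\<exists>ts. tpath (trans A) (init A) ts p0 \<and> lbl ts = h"
    and cC: "c \<in> C"
    and stab: "\<And>ts p. tpath (safe_trans A) p0 ts p \<Longrightarrow> ts \<noteq> [] \<Longrightarrow> c \<notin> col B (\<sigma>B (h @ lbl ts))"
begin

definition bet where "bet y = rstate B \<sigma>B (h @ y)"
definition E where "E = {\<sigma>B (h @ lbl ts) | ts p. tpath (safe_trans A) p0 ts p \<and> ts \<noteq> []}"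
definition Esl where "Esl q = {w. \<exists>r. irun E q w r}"

lemma h_sig: "set h \<subseteq> \<Sigma>" using hp Apath_lbl by blast

lemma sp_sig: "tpath (safe_trans A) p0 ts p \<Longrightarrow> set (h @ lbl ts) \<subseteq> \<Sigma>"
  using h_sig Spath_lbl by auto

lemma sp_lang: "tpath (safe_trans A) p0 ts p \<Longrightarrow> lang_from A p = residual L (h @ lbl ts)"
proof -
  assume sp: "tpath (safe_trans A) p0 ts p"
  obtain ts0 where "tpath (trans A) (init A) ts0 p0" "lbl ts0 = h" using hp by blast
  then have "tpath (trans A) (init A) (ts0 @ ts) p" using tpath_mono[OF sp safe_sub] by (auto simp: tpath_append)
  then show ?thesis using Apath_lang \<open>lbl ts0 = h\<close> by fastforce
qed

lemma bet_lang: "set y \<subseteq> \<Sigma> \<Longrightarrow> lang_from B (bet y) = residual L (h @ y)"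
  using Bres_lang h_sig by (simp add: bet_def)

lemma E_edge:
  assumes "tpath (safe_trans A) p0 (ts @ [t]) p"
  shows "\<sigma>B (h @ lbl (ts @ [t])) \<in> trans B \<and>
         \<sigma>B (h @ lbl (ts @ [t])) = (bet (lbl ts), fst (snd t), bet (lbl ts @ [fst (snd t)]))"
proof -
  have s: "set (h @ lbl (ts @ [t])) \<subseteq> \<Sigma>" using sp_sig[OF assms] .
  then have s1: "set (h @ lbl ts) \<subseteq> alph B" "fst (snd t) \<in> alph B" using aB by auto
  have eq: "h @ lbl (ts @ [t]) = (h @ lbl ts) @ [fst (snd t)]" by simp
  have eq2: "h @ (lbl ts @ [fst (snd t)]) = (h @ lbl ts) @ [fst (snd t)]" by simp
  show ?thesis unfolding eq bet_def eq2 using R2[OF rB s1] .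
qed

lemma E_sub: "E \<subseteq> trans B"
proof
  fix e assume "e \<in> E"
  then obtain ts p where e: "e = \<sigma>B (h @ lbl ts)" "tpath (safe_trans A) p0 ts p" "ts \<noteq> []"
    unfolding E_def by blast
  then obtain ts' t where "ts = ts' @ [t]" by (metis rev_exhaust)
  then show "e \<in> trans B" using E_edge e by blast
qed

lemma E_cfree: "e \<in> E \<Longrightarrow> c \<notin> col B e"
  unfolding E_def using stab by blast

lemma E_lang:
  assumes "e \<in> E"
  shows "lang_from B (snd (snd e)) = residual (lang_from B (fst e)) [fst (snd e)]"
proof -
  obtain ts p where e: "e = \<sigma>B (h @ lbl ts)" "tpath (safe_trans A) p0 ts p" "ts \<noteq> []"
    using assms unfolding E_def by blast
  then obtain ts' t where tt: "ts = ts' @ [t]" by (metis rev_exhaust)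
  then have eq: "e = (bet (lbl ts'), fst (snd t), bet (lbl ts' @ [fst (snd t)]))"
    using E_edge e by blast
  have "set (h @ lbl ts) \<subseteq> \<Sigma>" using sp_sig e(2) .
  then have s1: "set (lbl ts') \<subseteq> \<Sigma>" "set (lbl ts' @ [fst (snd t)]) \<subseteq> \<Sigma>" using tt by auto
  show ?thesis using eq bet_lang[OF s1(1)] bet_lang[OF s1(2)] by (simp add: residual_append)
qed

lemma Epath_lang: "tpath E q es q' \<Longrightarrow> lang_from B q' = residual (lang_from B q) (lbl es)"
proof (induction es arbitrary: q)
  case Nil then show ?case by simp
next
  case (Cons e es)
  then have "e \<in> E" "fst e = q" "tpath E (snd (snd e)) es q'" by auto
  then show ?case using Cons.IH E_lang by (simp add: residual_append)
qed

lemma E_lbl: "tpath E q es q' \<Longrightarrow> set (lbl es) \<subseteq> \<Sigma>"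
  using tpath_lbl_alph[OF tpath_mono[OF _ E_sub] wfB] aB by blast

lemma Esl_word: "w \<in> Esl q \<Longrightarrow> is_word \<Sigma> w"
proof -
  assume "w \<in> Esl q"
  then obtain r where r: "irun E q w r" by (auto simp: Esl_def)
  have "w i \<in> \<Sigma>" for i
  proof -
    have "r i \<in> trans B" "fst (snd (r i)) = w i" using r E_sub by (auto simp: irun_def)
    then show ?thesis using wfB aB by (auto simp: well_formed_def)
  qed
  then show ?thesis by (simp add: is_word_def)
qed

lemma Esl_conc: "tpath E q es q' \<Longrightarrow> w \<in> Esl q' \<Longrightarrow> conc (lbl es) w \<in> Esl q"
proof -
  assume a: "tpath E q es q'" "w \<in> Esl q'"
  then obtain r where "irun E q' w r" by (auto simp: Esl_def)
  from irun_conc[OF a(1) this] show ?thesis by (auto simp: Esl_def)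
qed

lemma F1:
  assumes sp: "tpath (safe_trans A) p0 ts p"
  shows "safe_lang A p \<subseteq> Esl (bet (lbl ts))"
proof
  fix w assume "w \<in> safe_lang A p"
  then obtain r where r: "irun (safe_trans A) p w r" by (auto simp: safe_lang_irun)
  define r' where "r' i = \<sigma>B (h @ lbl ts @ prefix w (Suc i))" for i
  have step: "r' i \<in> E \<and> r' i = (bet (lbl ts @ prefix w i), w i, bet (lbl ts @ prefix w (Suc i)))" for i
  proof -
    have "tpath (safe_trans A) p (map r [0..<Suc i]) (fst (r (Suc i)))" "lbl (map r [0..<Suc i]) = prefix w (Suc i)"
      using irun_prefix[OF r, of "Suc i"] by blast+
    then have sp2: "tpath (safe_trans A) p0 (ts @ map r [0..<Suc i]) (fst (r (Suc i)))"
      using sp by (auto simp: tpath_append)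
    have lb: "lbl (ts @ map r [0..<Suc i]) = lbl ts @ prefix w (Suc i)"
      using \<open>lbl (map r [0..<Suc i]) = prefix w (Suc i)\<close> by simp
    have inE: "r' i \<in> E" unfolding E_def r'_def using sp2 lb
      by (intro CollectI exI[of _ "ts @ map r [0..<Suc i]"] exI[of _ "fst (r (Suc i))"]) simp
    have "map r [0..<Suc i] = map r [0..<i] @ [r i]" by simp
    then have sp3: "tpath (safe_trans A) p0 ((ts @ map r [0..<i]) @ [r i]) (fst (r (Suc i)))"
      using sp2 by simp
    have lbi: "lbl (ts @ map r [0..<i]) = lbl ts @ prefix w i" using irun_prefix[OF r, of i] by simp
    have "fst (snd (r i)) = w i" using r by (simp add: irun_def)
    then have "r' i = (bet (lbl ts @ prefix w i), w i, bet (lbl ts @ prefix w i @ [w i]))"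
      using E_edge[OF sp3] lbi unfolding r'_def by (simp add: prefix_Suc)
    then show ?thesis using inE by (simp add: prefix_Suc)
  qed
  have m: "r' i \<in> E" for i using step[of i, THEN conjunct1] .
  have l: "fst (snd (r' i)) = w i" for i using step[of i, THEN conjunct2] by simp
  have n: "snd (snd (r' i)) = fst (r' (Suc i))" for i
    using step[of i, THEN conjunct2] step[of "Suc i", THEN conjunct2] by simp
  have z: "fst (r' 0) = bet (lbl ts)" using step[of 0, THEN conjunct2] by simp
  have "irun E (bet (lbl ts)) w r'"
    unfolding irun_def using m l n z by blast
  then show "w \<in> Esl (bet (lbl ts))" by (auto simp: Esl_def)
qed

lemma sp_Epath:
  assumes "tpath (safe_trans A) p0 (ts @ ts2) p"
  shows "\<exists>es. tpath E (bet (lbl ts)) es (bet (lbl (ts @ ts2))) \<and> lbl es = lbl ts2"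
  using assms
proof (induction ts2 arbitrary: p rule: rev_induct)
  case Nil then show ?case by (auto intro: exI[of _ "[]"])
next
  case (snoc t ts2)
  have sp: "tpath (safe_trans A) p0 ((ts @ ts2) @ [t]) p" using snoc.prems by simp
  then have "tpath (safe_trans A) p0 (ts @ ts2) (fst t)" unfolding tpath_snoc by blast
  then obtain es where es: "tpath E (bet (lbl ts)) es (bet (lbl (ts @ ts2)))" "lbl es = lbl ts2"
    using snoc.IH by blast
  have e: "\<sigma>B (h @ lbl ((ts @ ts2) @ [t])) = (bet (lbl (ts @ ts2)), fst (snd t), bet (lbl (ts @ ts2) @ [fst (snd t)]))"
    using E_edge[OF sp] by blast
  have eE: "\<sigma>B (h @ lbl ((ts @ ts2) @ [t])) \<in> E" unfolding E_def using sp by blast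
  have "tpath E (bet (lbl ts)) (es @ [\<sigma>B (h @ lbl ((ts @ ts2) @ [t]))]) (bet (lbl (ts @ ts2 @ [t])))"
    using es(1) e eE by (simp add: tpath_snoc)
  moreover have "lbl (es @ [\<sigma>B (h @ lbl ((ts @ ts2) @ [t]))]) = lbl (ts2 @ [t])" using es(2) e by simp
  ultimately show ?case by blast
qed

lemma X:
  "\<exists>es q. tpath E (bet []) es q \<and>
     (\<forall>es' q'. tpath E q es' q' \<longrightarrow> es' \<noteq> [] \<longrightarrow> \<sigma>A (h @ lbl es @ lbl es') \<notin> coBuchi_trans A)"
proof (rule ccontr)
  assume neg: "\<not> ?thesis"
  have neg': "\<exists>es' q'. tpath E q es' q' \<and> es' \<noteq> [] \<and> \<sigma>A (h @ lbl es @ lbl es') \<in> coBuchi_trans A"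
    if "tpath E (bet []) es q" for es q
    using neg that by blast
  define Inv where "Inv (es :: ('a \<times> 'b \<times> 'a) list) = (\<exists>q. tpath E (bet []) es q)" for es
  define Mv where "Mv (k::nat) (es :: ('a \<times> 'b \<times> 'a) list) (ys :: ('a \<times> 'b \<times> 'a) list) = (\<sigma>A (h @ lbl (es @ ys)) \<in> coBuchi_trans A)" for k es ys
  have st: "\<exists>ys. ys \<noteq> [] \<and> Mv k es ys \<and> Inv (es @ ys)" if inv: "Inv es" for k es
  proof -
    obtain q where q: "tpath E (bet []) es q" using inv unfolding Inv_def by blast
    obtain ys q' where ys: "tpath E q ys q'" "ys \<noteq> []" "\<sigma>A (h @ lbl es @ lbl ys) \<in> coBuchi_trans A"
      using neg'[OF q] by blast
    have "tpath E (bet []) (es @ ys) q'" using q ys(1) by (auto simp: tpath_append)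
    then show ?thesis using ys unfolding Mv_def Inv_def by auto
  qed
  have i0: "Inv []" by (simp add: Inv_def)
  obtain r n where rn: "n 0 = 0" "strict_mono (n :: nat \<Rightarrow> nat)" "\<forall>k. Inv (map r [0..<n k])"
      "\<forall>k. Mv k (map r [0..<n k]) (map r [n k..<n (Suc k)])"
    using iterate[of Inv Mv, OF i0 st] by blast
  define W' where "W' i = fst (snd (r i))" for i
  have ir: "irun E (bet []) W' r" using tpath_all_irun[of E "bet []" r n] rn
    unfolding Inv_def W'_def by blast
  define W where "W = conc h W'"
  obtain tsh where tsh: "tpath (trans B) (init B) tsh (rstate B \<sigma>B h)" "lbl tsh = h"
    using R3[OF rB] h_sig aB by blast
  have b0: "bet [] = rstate B \<sigma>B h" by (simp add: bet_def)
  have ir': "irun (trans B) (rstate B \<sigma>B h) W' r" using irun_mono[OF ir E_sub] b0 by simp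
  have irB: "irun (trans B) (init B) W (conc tsh r)"
    unfolding W_def using irun_conc[OF tsh(1) ir'] tsh(2) by simp
  have e0: "{i. c \<in> col B (r i)} = {}" using ir E_cfree by (auto simp: irun_def)
  have "finite {i. c \<in> col B (r i)}" by (subst e0) simp
  then have "accepting B r" using gB cC unfolding accepting_def gen_coBuchi_def by blast
  then have accB: "accepting B (conc tsh r)" using acc_conc[OF gB] by simp
  have "is_word \<Sigma> W'" using Esl_word[of W' "bet []"] ir by (auto simp: Esl_def)
  then have Ww: "is_word \<Sigma> W" using h_sig by (simp add: W_def is_word_conc)
  have "W \<in> lang B" using irB accB Ww aB by (auto simp: lang_def lang_from_def run_from_irun)
  then have "W \<in> lang A" using lA lB by simp
  then have "accepting A (\<lambda>i. \<sigma>A (prefix W (Suc i)))" using rA Ww aA by (simp add: resolver_def)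
  then have fin: "finite {i. 1 \<in> col A (\<sigma>A (prefix W (Suc i)))}"
    using gA by (auto simp: accepting_def gen_coBuchi_def)
  define pos where "pos k = length h + n (Suc k) - 1" for k
  have "inj pos"
  proof (rule injI)
    fix x y assume "pos x = pos y"
    moreover have "n (Suc x) > 0" "n (Suc y) > 0" using rn(1,2) by (metis strict_mono_less zero_less_Suc)+
    ultimately have "n (Suc x) = n (Suc y)" by (simp add: pos_def)
    then show "x = y" using strict_mono_eq[OF rn(2)] by simp
  qed
  moreover have "\<forall>k\<in>UNIV. 1 \<in> col A (\<sigma>A (prefix W (Suc (pos k))))"
  proof
    fix k :: nat
    have le: "n k \<le> n (Suc k)" using rn(2) by (simp add: strict_mono_less_eq)
    have pos1: "n (Suc k) > 0" using rn(1,2) by (metis strict_mono_less zero_less_Suc)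
    have "\<sigma>A (h @ lbl (map r [0..<n k] @ map r [n k..<n (Suc k)])) \<in> coBuchi_trans A"
      using rn(4) unfolding Mv_def by blast
    then have "\<sigma>A (h @ lbl (map r [0..<n (Suc k)])) \<in> coBuchi_trans A"
      unfolding map_upt_split[OF le, of r] .
    moreover have "lbl (map r [0..<n (Suc k)]) = prefix W' (n (Suc k))"
      using irun_prefix[OF ir] W'_def by blast
    moreover have "h @ prefix W' (n (Suc k)) = prefix W (Suc (pos k))"
      using prefix_conc_add[of h W' "n (Suc k)"] pos1 by (simp add: W_def pos_def)
    ultimately show "1 \<in> col A (\<sigma>A (prefix W (Suc (pos k))))" using coB_col by simp
  qed
  ultimately show False using inf_hits[OF fin _ infinite_UNIV_nat] by blast
qed

end



context region
begin

definition domd where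
  "domd q = (\<exists>g. g \<in> states A \<and> lang_from A g = lang_from B q \<and> Esl q \<subseteq> safe_lang A g)"

lemma dom_start: "\<exists>ts p. tpath (safe_trans A) p0 ts p \<and> domd (bet (lbl ts))"
proof -
  obtain es q where es: "tpath E (bet []) es q"
    and st: "\<forall>es' q'. tpath E q es' q' \<longrightarrow> es' \<noteq> [] \<longrightarrow> \<sigma>A (h @ lbl es @ lbl es') \<notin> coBuchi_trans A"
    using X by blast
  define H where "H = h @ lbl es"
  have HS: "set H \<subseteq> \<Sigma>" using h_sig E_lbl[OF es] H_def by auto
  define g where "g = rstate A \<sigma>A H"
  have gst: "g \<in> states A" using Ares_states HS g_def by simp
  have lg: "lang_from A g = residual L H" using Ares_lang HS g_def by simp
  have lq: "lang_from B q = residual L H"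
    using Epath_lang[OF es] bet_lang[of "[]"] by (simp add: H_def residual_append)
  have sl: "Esl q \<subseteq> safe_lang A g"
  proof
    fix w assume w: "w \<in> Esl q"
    then obtain r where r: "irun E q w r" by (auto simp: Esl_def)
    have wS: "is_word \<Sigma> w" using Esl_word w .
    define rr where "rr i = \<sigma>A (H @ prefix w (Suc i))" for i
    have step: "rr i \<in> safe_trans A \<and> rr i = (rstate A \<sigma>A (H @ prefix w i), w i, rstate A \<sigma>A (H @ prefix w (Suc i)))" for i
    proof -
      have p: "tpath E q (map r [0..<Suc i]) (fst (r (Suc i)))" "lbl (map r [0..<Suc i]) = prefix w (Suc i)"
        using irun_prefix[OF r, of "Suc i"] by blast+
      have "map r [0..<Suc i] \<noteq> []" by simp
      then have "\<sigma>A (h @ lbl es @ lbl (map r [0..<Suc i])) \<notin> coBuchi_trans A" using st p(1) by blast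
      then have nc: "rr i \<notin> coBuchi_trans A" using p(2) by (simp add: rr_def H_def)
      have s1: "set (H @ prefix w i) \<subseteq> alph A" "w i \<in> alph A"
        using HS set_prefix[OF wS, of i] wS aA by (auto simp: is_word_def)
      have eq: "H @ prefix w (Suc i) = (H @ prefix w i) @ [w i]" by (simp add: prefix_Suc)
      have R: "rr i \<in> trans A \<and> rr i = (rstate A \<sigma>A (H @ prefix w i), w i, rstate A \<sigma>A (H @ prefix w (Suc i)))"
        unfolding rr_def eq using R2[OF rA s1] .
      then show ?thesis using nc not_coB_safe by blast
    qed
    have m: "rr i \<in> safe_trans A" for i using step[of i, THEN conjunct1] .
    have l: "fst (snd (rr i)) = w i" for i using step[of i, THEN conjunct2] by simp
    have n: "snd (snd (rr i)) = fst (rr (Suc i))" for i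
      using step[of i, THEN conjunct2] step[of "Suc i", THEN conjunct2] by simp
    have z: "fst (rr 0) = g" using step[of 0, THEN conjunct2] by (simp add: g_def)
    have "irun (safe_trans A) g w rr" unfolding irun_def using m l n z by blast
    then show "w \<in> safe_lang A g" using wS aA by (auto simp: safe_lang_irun)
  qed
  have dq: "domd q" unfolding domd_def using gst lg lq sl by auto
  show ?thesis
  proof (cases "es = []")
    case True
    then have "q = bet []" using es by simp
    then show ?thesis using dq by (intro exI[of _ "[]"] exI[of _ p0]) simp
  next
    case False
    have "last es \<in> E" "q = snd (snd (last es))" using tpath_nth[OF es] False
      by (auto simp: last_conv_nth)
    then obtain ts p where tp: "last es = \<sigma>B (h @ lbl ts)" "tpath (safe_trans A) p0 ts p" "ts \<noteq> []"
      and qq: "q = snd (snd (last es))" unfolding E_def by blast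
    have "q = bet (lbl ts)" using tp qq by (simp add: bet_def rstate_def)
    then show ?thesis using dq tp by blast
  qed
qed

lemma dom_prop:
  assumes sp: "tpath (safe_trans A) p0 ts p" and d: "domd (bet (lbl ts))"
  shows "tpath (safe_trans A) p ts2 p' \<Longrightarrow> domd (bet (lbl (ts @ ts2)))"
proof (induction ts2 arbitrary: p' rule: rev_induct)
  case Nil then show ?case using d by simp
next
  case (snoc t ts2)
  have p2: "tpath (safe_trans A) p ts2 (fst t)" "t \<in> safe_trans A" "p' = snd (snd t)"
    using snoc.prems unfolding tpath_snoc by blast+
  have IH: "domd (bet (lbl (ts @ ts2)))" using snoc.IH[OF p2(1)] .
  then obtain g where g: "g \<in> states A" "lang_from A g = lang_from B (bet (lbl (ts @ ts2)))"
    "Esl (bet (lbl (ts @ ts2))) \<subseteq> safe_lang A g" unfolding domd_def by blast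
  have sp2: "tpath (safe_trans A) p0 ((ts @ ts2) @ [t]) p'"
    using sp snoc.prems by (auto simp: tpath_append)
  define a where "a = fst (snd t)"
  define q where "q = bet (lbl (ts @ ts2))"
  define q' where "q' = bet (lbl (ts @ ts2) @ [a])"
  have e: "\<sigma>B (h @ lbl ((ts @ ts2) @ [t])) = (q, a, q')"
    using E_edge[OF sp2] unfolding q_def q'_def a_def by blast
  have eE: "(q, a, q') \<in> E" unfolding E_def using sp2 e[symmetric] by blast
  have q'eq: "bet (lbl (ts @ ts2 @ [t])) = q'" by (simp add: q'_def a_def)
  have "p' \<in> S" using S_path[OF sp2 p0S] .
  then obtain w0 where "w0 \<in> safe_lang A p'" using SL_nonempty[OF nontriv] by blast
  moreover have "safe_lang A p' \<subseteq> Esl q'" using F1[OF sp2] q'eq by simp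
  ultimately have w0: "w0 \<in> Esl q'" by blast
  have ep: "tpath E q [(q, a, q')] q'" using eE by simp
  have "conc [a] w0 \<in> safe_lang A g" using Esl_conc[OF ep w0] g(3) q_def by auto
  from SL_split[OF this] obtain ts' g' where g': "tpath (safe_trans A) g ts' g'" "lbl ts' = [a]" "w0 \<in> safe_lang A g'"
    by blast
  have sub: "Esl q' \<subseteq> safe_lang A g'"
  proof
    fix w assume "w \<in> Esl q'"
    then have "conc [a] w \<in> safe_lang A g" using Esl_conc[OF ep] g(3) q_def by auto
    from SL_split[OF this] obtain ts'' g'' where g'': "tpath (safe_trans A) g ts'' g''" "lbl ts'' = [a]" "w \<in> safe_lang A g''"
      by blast
    have "g'' = g'" using safe_det_path[OF sdetA g''(1) g'(1)] g''(2) g'(2) by simp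
    then show "w \<in> safe_lang A g'" using g''(3) by simp
  qed
  have tA: "tpath (trans A) g ts' g'" using tpath_mono[OF g'(1) safe_sub] .
  have "lang_from A g' = residual (lang_from A g) [a]" using L3[OF gA sdA tA] g'(2) by simp
  also have "\<dots> = residual (lang_from B q) [a]" using g(2) q_def by simp
  also have "\<dots> = lang_from B q'" using E_lang[OF eE] by simp
  finally have lg': "lang_from A g' = lang_from B q'" .
  have "g' \<in> states A" using tpath_states[OF tA wfA g(1)] .
  then have "domd q'" unfolding domd_def using lg' sub by blast
  then show ?case using q'eq by simp
qed

lemma all_dom: "p \<in> S \<Longrightarrow> \<exists>ts. tpath (safe_trans A) p0 ts p \<and> domd (bet (lbl ts))"
proof -
  assume p: "p \<in> S"
  obtain ts1 p1 where t1: "tpath (safe_trans A) p0 ts1 p1" "domd (bet (lbl ts1))" using dom_start by blast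
  have "p1 \<in> S" using S_path[OF t1(1) p0S] .
  then obtain ts2 where t2: "tpath (safe_trans A) p1 ts2 p" using S_conn p by blast
  have "domd (bet (lbl (ts1 @ ts2)))" using dom_prop[OF t1 t2] .
  moreover have "tpath (safe_trans A) p0 (ts1 @ ts2) p" using t1(1) t2 by (auto simp: tpath_append)
  ultimately show ?thesis by blast
qed

lemma exists_eq: "\<exists>ts p. tpath (safe_trans A) p0 ts p \<and> Esl (bet (lbl ts)) = safe_lang A p"
proof -
  have fin: "finite (safe_lang A ` S)" using S_states wfA by (auto simp: well_formed_def intro: finite_subset)
  have ne: "safe_lang A ` S \<noteq> {}" using p0S by blast
  obtain M where M: "M \<in> safe_lang A ` S" "\<forall>X\<in>safe_lang A ` S. M \<subseteq> X \<longrightarrow> M = X"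
    using finite_has_maximal[OF fin ne] by blast
  then obtain pm where pm: "pm \<in> S" "M = safe_lang A pm" by blast
  obtain ts where ts: "tpath (safe_trans A) p0 ts pm" "domd (bet (lbl ts))" using all_dom[OF pm(1)] by blast
  then obtain g where g: "g \<in> states A" "lang_from A g = lang_from B (bet (lbl ts))"
    "Esl (bet (lbl ts)) \<subseteq> safe_lang A g" unfolding domd_def by blast
  have f1: "safe_lang A pm \<subseteq> Esl (bet (lbl ts))" using F1[OF ts(1)] .
  have "lang_from A g = lang_from A pm"
    using g(2) bet_lang[of "lbl ts"] sp_lang[OF ts(1)] sp_sig[OF ts(1)] by simp
  then have eqv: "equivalent_states A pm g" by (simp add: equivalent_states_def)
  have pmst: "pm \<in> states A" using pm(1) S_states by blast
  have "safe_lang A pm \<subseteq> safe_lang A g" using f1 g(3) by blast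
  then have "safe_component_of A pm = safe_component_of A g"
    using scA pmst g(1) eqv unfolding safe_centralised_def by blast
  then have "g \<in> S" using comp_self[OF g(1)] S_comp[OF pm(1)] by simp
  then have "safe_lang A pm = safe_lang A g" using M pm \<open>safe_lang A pm \<subseteq> safe_lang A g\<close> by blast
  then have "Esl (bet (lbl ts)) = safe_lang A pm" using f1 g(3) by blast
  then show ?thesis using ts(1) by blast
qed

lemma eq_prop:
  assumes sp: "tpath (safe_trans A) p0 ts pm" and eq: "Esl (bet (lbl ts)) = safe_lang A pm"
    and sp2: "tpath (safe_trans A) pm ts2 p"
  shows "Esl (bet (lbl (ts @ ts2))) = safe_lang A p"
proof
  have sp3: "tpath (safe_trans A) p0 (ts @ ts2) p" using sp sp2 by (auto simp: tpath_append)
  show "safe_lang A p \<subseteq> Esl (bet (lbl (ts @ ts2)))" using F1[OF sp3] .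
  show "Esl (bet (lbl (ts @ ts2))) \<subseteq> safe_lang A p"
  proof
    fix w assume w: "w \<in> Esl (bet (lbl (ts @ ts2)))"
    obtain es where es: "tpath E (bet (lbl ts)) es (bet (lbl (ts @ ts2)))" "lbl es = lbl ts2"
      using sp_Epath[OF sp3] by blast
    have "conc (lbl ts2) w \<in> safe_lang A pm" using Esl_conc[OF es(1) w] es(2) eq by simp
    from SL_split[OF this] obtain ts' s where s: "tpath (safe_trans A) pm ts' s" "lbl ts' = lbl ts2" "w \<in> safe_lang A s"
      by blast
    have "s = p" using safe_det_path[OF sdetA s(1) sp2] s(2) by simp
    then show "w \<in> safe_lang A p" using s(3) by simp
  qed
qed

lemma injection: "\<exists>b. inj_on b S \<and> (\<forall>p\<in>S. b p \<in> states B \<and> lang_from B (b p) = lang_from A p)"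
proof -
  obtain ts pm where e: "tpath (safe_trans A) p0 ts pm" "Esl (bet (lbl ts)) = safe_lang A pm"
    using exists_eq by blast
  have pm: "pm \<in> S" using S_path[OF e(1) p0S] .
  have "\<forall>p\<in>S. \<exists>ts2. tpath (safe_trans A) pm ts2 p" using S_conn[OF pm] by blast
  then obtain tsf where tsf: "\<forall>p\<in>S. tpath (safe_trans A) pm (tsf p) p" by metis
  define b where "b p = bet (lbl (ts @ tsf p))" for p
  have sp: "tpath (safe_trans A) p0 (ts @ tsf p) p" if "p \<in> S" for p
    using e(1) tsf that by (auto simp: tpath_append)
  have esl: "Esl (b p) = safe_lang A p" if "p \<in> S" for p
    using eq_prop[OF e tsf[rule_format, OF that]] by (simp add: b_def)
  have lang: "lang_from B (b p) = lang_from A p" if "p \<in> S" for p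
    using bet_lang[of "lbl (ts @ tsf p)"] sp_lang[OF sp[OF that]] sp_sig[OF sp[OF that]] by (simp add: b_def)
  have st: "b p \<in> states B" if "p \<in> S" for p
    using Bres_states sp_sig[OF sp[OF that]] by (simp add: b_def bet_def)
  have "inj_on b S"
  proof (rule inj_onI)
    fix x y assume xy: "x \<in> S" "y \<in> S" "b x = b y"
    then have "safe_lang A x = safe_lang A y" using esl by metis
    moreover have "equivalent_states A x y" using lang xy by (metis equivalent_states_def)
    ultimately show "x = y" using sminA xy S_states unfolding safe_minimal_def by blast
  qed
  then show ?thesis using lang st by blast
qed

end



context comp
begin

lemma comp_inj: "\<exists>b. inj_on b S \<and> (\<forall>p\<in>S. b p \<in> states B \<and> lang_from B (b p) = lang_from A p)"
proof (cases "S = {}")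
  case True then show ?thesis by auto
next
  case ne: False
  show ?thesis
  proof (cases "\<forall>p\<in>S. \<exists>a p'. (p, a, p') \<in> safe_trans A \<and> p' \<in> S")
    case nt: True
    obtain h p0 c where Yc: "p0 \<in> S" "\<exists>ts. tpath (trans A) (init A) ts p0 \<and> lbl ts = h" "c \<in> C"
      "\<forall>ts p. tpath (safe_trans A) p0 ts p \<longrightarrow> ts \<noteq> [] \<longrightarrow> c \<notin> col B (\<sigma>B (h @ lbl ts))"
      using Y[OF nt ne] by blast
    have "region B C A L \<Sigma> \<sigma>B \<sigma>A S h p0 c"
      unfolding region_def region_axioms_def using comp_axioms nt Yc by blast
    then show ?thesis by (rule region.injection)
  next
    case False
    then obtain p where p: "p \<in> S" "\<not> (\<exists>a p'. (p, a, p') \<in> safe_trans A \<and> p' \<in> S)" by blast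
    have Sp: "S = {p}" using S_trivial[OF p] .
    obtain ts where ts: "tpath (trans A) (init A) ts p" using reach_path S_states p(1) by blast
    define b where "b = (\<lambda>_::'d. rstate B \<sigma>B (lbl ts))"
    have "b p \<in> states B" using Bres_states Apath_lbl[OF ts] by (simp add: b_def)
    moreover have "lang_from B (b p) = lang_from A p"
      using Bres_lang Apath_lbl[OF ts] Apath_lang[OF ts] by (simp add: b_def)
    ultimately show ?thesis using Sp by (intro exI[of _ b]) simp
  qed
qed

end

lemma final:
  fixes B :: "('p, 'a, 'c set) automaton" and C :: "'c set"
    and Amin :: "('q, 'a, nat set) automaton"
    and L :: "(nat \<Rightarrow> 'a) set" and \<Sigma> :: "'a set"
  assumes "gen_coBuchi B C" and "history_deterministic B"
    and "alph B = \<Sigma>" and "lang B = L"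
    and "coBuchi Amin" and "history_deterministic Amin"
    and "alph Amin = \<Sigma>" and "lang Amin = L"
    and "nice Amin" and "safe_minimal Amin" and "safe_centralised Amin"
  shows "(\<Sum>R\<in>residuals \<Sigma> L. Max {card (S \<inter> states_of_residual Amin R) | S. S \<in> safe_components Amin})
           \<le> card (states B)"
proof -
  obtain \<sigma>B where rB: "resolver B \<sigma>B" using assms(2) by (auto simp: history_deterministic_def)
  obtain \<sigma>A where rA: "resolver Amin \<sigma>A" using assms(6) by (auto simp: history_deterministic_def)
  have set: "setting B C Amin L \<Sigma> \<sigma>B \<sigma>A"
    unfolding setting_def using assms rB rA by blast
  define BR where "BR R = {q \<in> states B. lang_from B q = R}" for R
  have finB: "finite (states B)" using assms(1) by (simp add: gen_coBuchi_def well_formed_def)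
  have finBR: "finite (BR R)" for R using finB by (simp add: BR_def)
  have each: "card (S \<inter> states_of_residual Amin R) \<le> card (BR R)" if S: "S \<in> safe_components Amin" for S R
  proof -
    have "comp B C Amin L \<Sigma> \<sigma>B \<sigma>A S" unfolding comp_def comp_axioms_def using set S by blast
    from comp.comp_inj[OF this] obtain b where b: "inj_on b S" "\<forall>p\<in>S. b p \<in> states B \<and> lang_from B (b p) = lang_from Amin p"
      by blast
    have "inj_on b (S \<inter> states_of_residual Amin R)" using b(1) by (rule inj_on_subset) blast
    moreover have "b ` (S \<inter> states_of_residual Amin R) \<subseteq> BR R"
      using b(2) by (auto simp: BR_def states_of_residual_def)
    ultimately show ?thesis using card_inj_on_le finBR by blast
  qed
  have mx: "Max {card (S \<inter> states_of_residual Amin R) | S. S \<in> safe_components Amin} \<le> card (BR R)" for R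
  proof -
    have "{card (S \<inter> states_of_residual Amin R) | S. S \<in> safe_components Amin}
          = (\<lambda>S. card (S \<inter> states_of_residual Amin R)) ` safe_components Amin" by auto
    moreover have "finite (safe_components Amin)"
      using assms(5) by (simp add: safe_components_def coBuchi_def gen_coBuchi_def well_formed_def)
    moreover have "safe_components Amin \<noteq> {}"
      using assms(5) by (simp add: safe_components_def coBuchi_def gen_coBuchi_def well_formed_def) blast
    ultimately show ?thesis using each by (simp add: Max_le_iff)
  qed
  show ?thesis
  proof (cases "finite (residuals \<Sigma> L)")
    case False then show ?thesis by simp
  next
    case fin: True
    have "(\<Sum>R\<in>residuals \<Sigma> L. Max {card (S \<inter> states_of_residual Amin R) | S. S \<in> safe_components Amin})
          \<le> (\<Sum>R\<in>residuals \<Sigma> L. card (BR R))" using mx by (rule sum_mono)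
    also have "\<dots> = card (\<Union>R\<in>residuals \<Sigma> L. BR R)"
      using fin finBR by (subst card_UN_disjoint) (auto simp: BR_def)
    also have "\<dots> \<le> card (states B)" using finB by (intro card_mono) (auto simp: BR_def)
    finally show ?thesis .
  qed
qed



theorem proposition24:
  fixes B :: "('p, 'a, 'c set) automaton" and C :: "'c set"
    and Amin :: "('q, 'a, nat set) automaton"
    and L :: "(nat \<Rightarrow> 'a) set" and \<Sigma> :: "'a set"
  assumes "gen_coBuchi B C" and "history_deterministic B"
    and "alph B = \<Sigma>" and "lang B = L"
    and "coBuchi Amin" and "history_deterministic Amin"
    and "alph Amin = \<Sigma>" and "lang Amin = L"
    and "nice Amin" and "safe_minimal Amin" and "safe_centralised Amin"
  shows "(\<Sum>R\<in>residuals \<Sigma> L. Max {card (S \<inter> states_of_residual Amin R) | S. S \<in> safe_components Amin})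
           \<le> card (states B)"
    using assms by (rule final)

end
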